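(* If a formula $A$ is derivable in the axiom system of $\mathbb{PCL}$ or of one of its extensions $\mathbb{PS}$ ($S$ a string among N, T, W, C, U, NU, TU, WU, CU, A, NA, TA, WA, CA), then for any world label $x$ the sequent $\Rightarrow x:A$ is derivable in the corresponding calculus $\mathsf{CL}$, respectively $\mathsf{CL}^S$.
   Context: Formulas $\mathcal{L}::=p\mid\bot\mid A\wedge B\mid A\lor B\mid A\to B\mid A>B$, $\neg A:=A\to\bot$, $\top:=\neg\bot$. Axiom systems: $\mathbb{PCL}$ = classical propositional logic + (RCEA) from $A\leftrightarrow B$ infer $(A>C)\leftrightarrow(B>C)$; (RCK) from $A\to B$ infer $(C>A)\to(C>B)$; (ID) $A>A$; (R-And) $(A>B)\wedge(A>C)\to(A>(B\wedge C))$; (CM) $(A>B)\wedge(A>C)\to((A\wedge B)>C)$; (OR) $(A>C)\wedge(B>C)\to((A\lor B)>C)$. (N) $\neg(\top>\bot)$; (T) $A\to\neg(A>\bot)$; (W) $(A>B)\to(A\to B)$; (C) $(A\wedge B)\to(A>B)$; (U$_1$) $(\neg A>\bot)\to(\neg(\neg A>\bot)>\bot)$; (U$_2$) $\neg(A>\bot)\to((A>\bot)>\bot)$; (A$_1$) $(A>B)\to(C>(A>B))$; (A$_2$) $\neg(A>B)\to(C>\neg(A>B))$. $\mathbb{PN}=\mathbb{PCL}+$(N), $\mathbb{PT}=\mathbb{PN}+$(T), $\mathbb{PW}=\mathbb{PT}+$(W), $\mathbb{PC}=\mathbb{PW}+$(C); $\mathbb{PU}=\mathbb{PCL}+$(U$_1$),(U$_2$),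 $\mathbb{PNU},\dots,\mathbb{PCU}$ add (N); (N),(T); etc. to $\mathbb{PU}$; $\mathbb{PA}=\mathbb{PCL}+$(A$_1$),(A$_2$), $\mathbb{PNA},\dots,\mathbb{PCA}$ analogously. Sequent calculi: world labels $x,y,\dots$; neighbourhood labels $a,b,\dots$ incl. $\{x\}$. Relational atoms $a\in N(x)$, $x\in a$, $a\subseteq b$; labelled formulas: these, $x:A$, $a\Vdash^\exists A$, $a\Vdash^\forall A$, $x\Vdash_aA|B$. Sequents: multisets, relational atoms only on the left. Rules of $\mathsf{CL}$ (premisses / conclusion; "(u!)": $u$ fresh): initial $x:p,\Gamma\Rightarrow\Delta,x:p$ ($p$ atomic), $x:\bot,\Gamma\Rightarrow\Delta$; G3 rules for $\wedge,\vee,\to$; L$\forall$: $x:A,x\in a,a\Vdash^\forall A,\Gamma\Rightarrow\Delta$ / $x\in a,a\Vdash^\forall A,\Gamma\Rightarrow\Delta$; R$\forall$(x!): $x\in a,\Gamma\Rightarrow\Delta,x:A$ / $\Gamma\Rightarrow\Delta,a\Vdash^\forall A$; L$\exists$(x!): $x\in a,x:A,\Gamma\Rightarrow\Delta$ / $a\Vdash^\exists A,\Gamma\Rightarrow\Delta$; R$\exists$: $x\in a,\Gamma\Rightarrow\Delta,x:A,a\Vdash^\exists A$ / $x\in a,\Gamma\Rightarrow\Delta,a\Vdash^\exists A$; R$>$(a!): $a\in N(x),a\Vdash^\exists A,\Gamma\Rightarrow\Delta,x\Vdash_aA|B$ / $\Gamma\Rightarrow\Delta,x:A>B$; L$>$: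 $a\in N(x),x:A>B,\Gamma\Rightarrow\Delta,a\Vdash^\exists A$ and $x\Vdash_aA|B,a\in N(x),x:A>B,\Gamma\Rightarrow\Delta$ / $a\in N(x),x:A>B,\Gamma\Rightarrow\Delta$; R$|$: $c\in N(x),c\subseteq a,\Gamma\Rightarrow\Delta,x\Vdash_aA|B,c\Vdash^\exists A$ and $c\in N(x),c\subseteq a,\Gamma\Rightarrow\Delta,x\Vdash_aA|B,c\Vdash^\forall A\to B$ / $c\in N(x),c\subseteq a,\Gamma\Rightarrow\Delta,x\Vdash_aA|B$; L$|$(c!): $c\in N(x),c\subseteq a,c\Vdash^\exists A,c\Vdash^\forall A\to B,\Gamma\Rightarrow\Delta$ / $x\Vdash_aA|B,\Gamma\Rightarrow\Delta$; Ref: $a\subseteq a,\Gamma\Rightarrow\Delta$ / $\Gamma\Rightarrow\Delta$; Tr: $c\subseteq a,c\subseteq b,b\subseteq a,\Gamma\Rightarrow\Delta$ / $c\subseteq b,b\subseteq a,\Gamma\Rightarrow\Delta$; L$\subseteq$: $x\in a,a\subseteq b,x\in b,\Gamma\Rightarrow\Delta$ / $x\in a,a\subseteq b,\Gamma\Rightarrow\Delta$. Extension rules: N(a!): $a\in N(x),\Gamma\Rightarrow\Delta$ / $\Gamma\Rightarrow\Delta$; 0(y!): $y\in a,a\in N(x),\Gamma\Rightarrow\Delta$ / $a\in N(x),\Gamma\Rightarrow\Delta$; T(a!): $x\in a,a\in N(x),\Gamma\Rightarrow\Delta$ / $\Gamma\Rightarrow\Delta$; W: $x\in a,a\in N(x),\Gamma\Rightarrow\Delta$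 / $a\in N(x),\Gamma\Rightarrow\Delta$; Single: $x\in\{x\},\{x\}\in N(x),\Gamma\Rightarrow\Delta$ / $\{x\}\in N(x),\Gamma\Rightarrow\Delta$; C: $\{x\}\in N(x),\{x\}\subseteq a,a\in N(x),\Gamma\Rightarrow\Delta$ / $a\in N(x),\Gamma\Rightarrow\Delta$; Repl$_1$: $y\in\{x\},At(x),At(y),\Gamma\Rightarrow\Delta$ / $y\in\{x\},At(x),\Gamma\Rightarrow\Delta$; Repl$_2$: same premiss / $y\in\{x\},At(y),\Gamma\Rightarrow\Delta$ ($At(x)$ among $x:P$, $P$ atomic, $x\in a$, $a\in N(x)$, $x\in\{z\}$); U$_1$(c!): $z\in c,c\in N(x),a\in N(x),y\in a,b\in N(y),z\in b,\Gamma\Rightarrow\Delta$ / $a\in N(x),y\in a,b\in N(y),z\in b,\Gamma\Rightarrow\Delta$; U$_2$(c!): $z\in c,c\in N(y),a\in N(x),y\in a,b\in N(x),z\in b,\Gamma\Rightarrow\Delta$ / $a\in N(x),y\in a,b\in N(x),z\in b,\Gamma\Rightarrow\Delta$; A$_1$: $b\in N(y),a\in N(x),y\in a,b\in N(x),\Gamma\Rightarrow\Delta$ / $a\in N(x),y\in a,b\in N(x),\Gamma\Rightarrow\Delta$; A$_2$: $b\in N(x),a\in N(x),y\in a,b\in N(y),\Gamma\Rightarrow\Delta$ / $a\in N(x),y\in a,b\in N(y),\Gamma\Rightarrow\Delta$; plus contracted instances of U$_1$,U$_2$,A$_1$. Calculi: $\mathsf{CL}^N=\mathsf{CL}+$N,0;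 $\mathsf{CL}^T=\mathsf{CL}^N+$T; $\mathsf{CL}^W=\mathsf{CL}^T+$W; $\mathsf{CL}^C=\mathsf{CL}^W+$C,Single,Repl$_1$,Repl$_2$; $\mathsf{CL}^U=\mathsf{CL}+$U$_1$,U$_2$; $\mathsf{CL}^{NU},\dots,\mathsf{CL}^{CU}$ = $\mathsf{CL}^N,\dots,\mathsf{CL}^C$ + U$_1$,U$_2$; $\mathsf{CL}^A=\mathsf{CL}+$A$_1$,A$_2$; $\mathsf{CL}^{NA},\dots,\mathsf{CL}^{CA}$ = $\mathsf{CL}^N,\dots,\mathsf{CL}^C$ + A$_1$,A$_2$. *)

theory Defs
  imports Main "HOL-Library.Multiset"
begin

datatype form =
    Atom nat
  | Bot
  | And form form
  | Or form form
  | Imp form form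
  | Cond form form

definition Neg :: "form \<Rightarrow> form" where "Neg A = Imp A Bot"
definition Top :: form where "Top = Neg Bot"
definition Iff :: "form \<Rightarrow> form \<Rightarrow> form" where "Iff A B = And (Imp A B) (Imp B A)"

fun peval :: "(form \<Rightarrow> bool) \<Rightarrow> form \<Rightarrow> bool" where
  "peval v (Atom p) = v (Atom p)"
| "peval v Bot = False"
| "peval v (And A B) = (peval v A \<and> peval v B)"
| "peval v (Or A B) = (peval v A \<or> peval v B)"
| "peval v (Imp A B) = (peval v A \<longrightarrow> peval v B)"
| "peval v (Cond A B) = v (Cond A B)"

definition taut :: "form \<Rightarrow> bool" where
  "taut A \<longleftrightarrow> (\<forall>v. peval v A)"

datatype logic = PCL | PN | PT | PW | PC | PU | PNU | PTU | PWU | PCU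
               | PA | PNA | PTA | PWA | PCA

definition hasN :: "logic \<Rightarrow> bool" where
  "hasN L \<longleftrightarrow> L \<in> {PN, PT, PW, PC, PNU, PTU, PWU, PCU, PNA, PTA, PWA, PCA}"
definition hasT :: "logic \<Rightarrow> bool" where
  "hasT L \<longleftrightarrow> L \<in> {PT, PW, PC, PTU, PWU, PCU, PTA, PWA, PCA}"
definition hasW :: "logic \<Rightarrow> bool" where
  "hasW L \<longleftrightarrow> L \<in> {PW, PC, PWU, PCU, PWA, PCA}"
definition hasC :: "logic \<Rightarrow> bool" where
  "hasC L \<longleftrightarrow> L \<in> {PC, PCU, PCA}"
definition hasU :: "logic \<Rightarrow> bool" where
  "hasU L \<longleftrightarrow> L \<in> {PU, PNU, PTU, PWU, PCU}"
definition hasA :: "logic \<Rightarrow> bool" where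
  "hasA L \<longleftrightarrow> L \<in> {PA, PNA, PTA, PWA, PCA}"

text \<open>Hilbert-style derivability: classical propositional logic is given by
  all (substitution instances of) tautologies plus modus ponens.\<close>
inductive hderiv :: "logic \<Rightarrow> form \<Rightarrow> bool" where
  Taut: "taut A \<Longrightarrow> hderiv L A"
| MP: "hderiv L (Imp A B) \<Longrightarrow> hderiv L A \<Longrightarrow> hderiv L B"
| RCEA: "hderiv L (Iff A B) \<Longrightarrow> hderiv L (Iff (Cond A C) (Cond B C))"
| RCK: "hderiv L (Imp A B) \<Longrightarrow> hderiv L (Imp (Cond C A) (Cond C B))"
| ID: "hderiv L (Cond A A)"
| RAnd: "hderiv L (Imp (And (Cond A B) (Cond A C)) (Cond A (And B C)))"
| CM: "hderiv L (Imp (And (Cond A B) (Cond A C)) (Cond (And A B) C))"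
| OR: "hderiv L (Imp (And (Cond A C) (Cond B C)) (Cond (Or A B) C))"
| AxN: "hasN L \<Longrightarrow> hderiv L (Neg (Cond Top Bot))"
| AxT: "hasT L \<Longrightarrow> hderiv L (Imp A (Neg (Cond A Bot)))"
| AxW: "hasW L \<Longrightarrow> hderiv L (Imp (Cond A B) (Imp A B))"
| AxC: "hasC L \<Longrightarrow> hderiv L (Imp (And A B) (Cond A B))"
| AxU1: "hasU L \<Longrightarrow>
    hderiv L (Imp (Cond (Neg A) Bot) (Cond (Neg (Cond (Neg A) Bot)) Bot))"
| AxU2: "hasU L \<Longrightarrow> hderiv L (Imp (Neg (Cond A Bot)) (Cond (Cond A Bot) Bot))"
| AxA1: "hasA L \<Longrightarrow> hderiv L (Imp (Cond A B) (Cond C (Cond A B)))"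
| AxA2: "hasA L \<Longrightarrow> hderiv L (Imp (Neg (Cond A B)) (Cond C (Neg (Cond A B))))"

type_synonym wlabel = nat

text \<open>Neighbourhood labels: variables a, b, ... and singleton labels {x}.\<close>
datatype nlabel = NV nat | Sg wlabel

datatype lform =
    InN nlabel wlabel              (* a \<in> N(x) *)
  | Mem wlabel nlabel
  | Sub nlabel nlabel
  | Lab wlabel form                (* x : A *)
  | FEx nlabel form                (* a \<Vdash>\<exists> A *)
  | FAll nlabel form               (* a \<Vdash>\<forall> A *)
  | CondL wlabel nlabel form form  (* x \<Vdash>_a A|B *)

fun wl_nl :: "nlabel \<Rightarrow> wlabel set" where
  "wl_nl (NV n) = {}" | "wl_nl (Sg x) = {x}"
fun nv_nl :: "nlabel \<Rightarrow> nat set" where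
  "nv_nl (NV n) = {n}" | "nv_nl (Sg x) = {}"

fun wl_lf :: "lform \<Rightarrow> wlabel set" where
  "wl_lf (InN a x) = wl_nl a \<union> {x}"
| "wl_lf (Mem x a) = {x} \<union> wl_nl a"
| "wl_lf (Sub a b) = wl_nl a \<union> wl_nl b"
| "wl_lf (Lab x A) = {x}"
| "wl_lf (FEx a A) = wl_nl a"
| "wl_lf (FAll a A) = wl_nl a"
| "wl_lf (CondL x a A B) = {x} \<union> wl_nl a"

fun nv_lf :: "lform \<Rightarrow> nat set" where
  "nv_lf (InN a x) = nv_nl a"
| "nv_lf (Mem x a) = nv_nl a"
| "nv_lf (Sub a b) = nv_nl a \<union> nv_nl b"
| "nv_lf (Lab x A) = {}"
| "nv_lf (FEx a A) = nv_nl a"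
| "nv_lf (FAll a A) = nv_nl a"
| "nv_lf (CondL x a A B) = nv_nl a"

definition wl_seq :: "lform multiset \<Rightarrow> lform multiset \<Rightarrow> wlabel set" where
  "wl_seq G D = (\<Union>F \<in> set_mset G \<union> set_mset D. wl_lf F)"
definition nv_seq :: "lform multiset \<Rightarrow> lform multiset \<Rightarrow> nat set" where
  "nv_seq G D = (\<Union>F \<in> set_mset G \<union> set_mset D. nv_lf F)"

text \<open>Atoms At(x) for the replacement rules: x:P (P atomic), x \<in> a, a \<in> N(x),
  x \<in> {z}; the distinguished position of x is filled by the given world label.\<close>
datatype atkind = AkLab nat | AkMem nlabel | AkInN nlabel | AkSg wlabel

fun At :: "atkind \<Rightarrow> wlabel \<Rightarrow> lform" where
  "At (AkLab p) x = Lab x (Atom p)"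
| "At (AkMem a) x = Mem x a"
| "At (AkInN a) x = InN a x"
| "At (AkSg z) x = Mem x (Sg z)"

text \<open>deriv L G D: the sequent G \<Rightarrow> D is derivable in the calculus
  corresponding to L (CL for PCL, CL^S for PS). Freshness (u!) means that u does
  not occur in the conclusion.\<close>
inductive deriv :: "logic \<Rightarrow> lform multiset \<Rightarrow> lform multiset \<Rightarrow> bool" where
  Init: "deriv L (add_mset (Lab x (Atom p)) G) (add_mset (Lab x (Atom p)) D)"
| LBot: "deriv L (add_mset (Lab x Bot) G) D"
| LAnd: "deriv L ({#Lab x A, Lab x B#} + G) D \<Longrightarrow>
         deriv L (add_mset (Lab x (And A B)) G) D"
| RAnd: "deriv L G (add_mset (Lab x A) D) \<Longrightarrow> deriv L G (add_mset (Lab x B) D) \<Longrightarrow>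
         deriv L G (add_mset (Lab x (And A B)) D)"
| LOr: "deriv L (add_mset (Lab x A) G) D \<Longrightarrow> deriv L (add_mset (Lab x B) G) D \<Longrightarrow>
        deriv L (add_mset (Lab x (Or A B)) G) D"
| ROr: "deriv L G ({#Lab x A, Lab x B#} + D) \<Longrightarrow>
        deriv L G (add_mset (Lab x (Or A B)) D)"
| LImp: "deriv L G (add_mset (Lab x A) D) \<Longrightarrow> deriv L (add_mset (Lab x B) G) D \<Longrightarrow>
         deriv L (add_mset (Lab x (Imp A B)) G) D"
| RImp: "deriv L (add_mset (Lab x A) G) (add_mset (Lab x B) D) \<Longrightarrow>
         deriv L G (add_mset (Lab x (Imp A B)) D)"
| LAll: "deriv L ({#Lab x A, Mem x a, FAll a A#} + G) D \<Longrightarrow>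
         deriv L ({#Mem x a, FAll a A#} + G) D"
| RAll: "x \<notin> wl_seq G (add_mset (FAll a A) D) \<Longrightarrow>
         deriv L (add_mset (Mem x a) G) (add_mset (Lab x A) D) \<Longrightarrow>
         deriv L G (add_mset (FAll a A) D)"
| LEx: "x \<notin> wl_seq (add_mset (FEx a A) G) D \<Longrightarrow>
        deriv L ({#Mem x a, Lab x A#} + G) D \<Longrightarrow>
        deriv L (add_mset (FEx a A) G) D"
| REx: "deriv L (add_mset (Mem x a) G) ({#Lab x A, FEx a A#} + D) \<Longrightarrow>
        deriv L (add_mset (Mem x a) G) (add_mset (FEx a A) D)"
| RCond: "n \<notin> nv_seq G (add_mset (Lab x (Cond A B)) D) \<Longrightarrow>
          deriv L ({#InN (NV n) x, FEx (NV n) A#} + G) (add_mset (CondL x (NV n) A B) D) \<Longrightarrow>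
          deriv L G (add_mset (Lab x (Cond A B)) D)"
| LCond: "deriv L ({#InN a x, Lab x (Cond A B)#} + G) (add_mset (FEx a A) D) \<Longrightarrow>
          deriv L ({#CondL x a A B, InN a x, Lab x (Cond A B)#} + G) D \<Longrightarrow>
          deriv L ({#InN a x, Lab x (Cond A B)#} + G) D"
| RBar: "deriv L ({#InN c x, Sub c a#} + G) ({#CondL x a A B, FEx c A#} + D) \<Longrightarrow>
         deriv L ({#InN c x, Sub c a#} + G) ({#CondL x a A B, FAll c (Imp A B)#} + D) \<Longrightarrow>
         deriv L ({#InN c x, Sub c a#} + G) (add_mset (CondL x a A B) D)"
| LBar: "n \<notin> nv_seq (add_mset (CondL x a A B) G) D \<Longrightarrow>
         deriv L ({#InN (NV n) x, Sub (NV n) a, FEx (NV n) A, FAll (NV n) (Imp A B)#} + G) D \<Longrightarrow>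
         deriv L (add_mset (CondL x a A B) G) D"
| Ref: "deriv L (add_mset (Sub a a) G) D \<Longrightarrow> deriv L G D"
| Tr: "deriv L ({#Sub c a, Sub c b, Sub b a#} + G) D \<Longrightarrow>
       deriv L ({#Sub c b, Sub b a#} + G) D"
| LSub: "deriv L ({#Mem x a, Sub a b, Mem x b#} + G) D \<Longrightarrow>
         deriv L ({#Mem x a, Sub a b#} + G) D"
| RuleN: "hasN L \<Longrightarrow> n \<notin> nv_seq G D \<Longrightarrow>
          deriv L (add_mset (InN (NV n) x) G) D \<Longrightarrow> deriv L G D"
| Rule0: "hasN L \<Longrightarrow> y \<notin> wl_seq (add_mset (InN a x) G) D \<Longrightarrow>
          deriv L ({#Mem y a, InN a x#} + G) D \<Longrightarrow> deriv L (add_mset (InN a x) G) D"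
| RuleT: "hasT L \<Longrightarrow> n \<notin> nv_seq G D \<Longrightarrow>
          deriv L ({#Mem x (NV n), InN (NV n) x#} + G) D \<Longrightarrow> deriv L G D"
| RuleW: "hasW L \<Longrightarrow> deriv L ({#Mem x a, InN a x#} + G) D \<Longrightarrow>
          deriv L (add_mset (InN a x) G) D"
| Single: "hasC L \<Longrightarrow> deriv L ({#Mem x (Sg x), InN (Sg x) x#} + G) D \<Longrightarrow>
           deriv L (add_mset (InN (Sg x) x) G) D"
| RuleC: "hasC L \<Longrightarrow> deriv L ({#InN (Sg x) x, Sub (Sg x) a, InN a x#} + G) D \<Longrightarrow>
          deriv L (add_mset (InN a x) G) D"
| Repl1: "hasC L \<Longrightarrow> deriv L ({#Mem y (Sg x), At k x, At k y#} + G) D \<Longrightarrow>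
          deriv L ({#Mem y (Sg x), At k x#} + G) D"
| Repl2: "hasC L \<Longrightarrow> deriv L ({#Mem y (Sg x), At k x, At k y#} + G) D \<Longrightarrow>
          deriv L ({#Mem y (Sg x), At k y#} + G) D"
(* U1, U2, A1 together with their contracted instances: the principal atoms of
   the conclusion need only occur (as a set) in the antecedent *)
| RuleU1: "hasU L \<Longrightarrow> n \<notin> nv_seq G D \<Longrightarrow>
           {InN a x, Mem y a, InN b y, Mem z b} \<subseteq> set_mset G \<Longrightarrow>
           deriv L ({#Mem z (NV n), InN (NV n) x#} + G) D \<Longrightarrow> deriv L G D"
| RuleU2: "hasU L \<Longrightarrow> n \<notin> nv_seq G D \<Longrightarrow>
           {InN a x, Mem y a, InN b x, Mem z b} \<subseteq> set_mset G \<Longrightarrow>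
           deriv L ({#Mem z (NV n), InN (NV n) y#} + G) D \<Longrightarrow> deriv L G D"
| RuleA1: "hasA L \<Longrightarrow> {InN a x, Mem y a, InN b x} \<subseteq> set_mset G \<Longrightarrow>
           deriv L (add_mset (InN b y) G) D \<Longrightarrow> deriv L G D"
| RuleA2: "hasA L \<Longrightarrow>
           deriv L ({#InN b x, InN a x, Mem y a, InN b y#} + G) D \<Longrightarrow>
           deriv L ({#InN a x, Mem y a, InN b y#} + G) D"

end

theory Submission
  imports Defs "HOL-Library.Countable"
begin



instance form :: countable by countable_datatype
instance nlabel :: countable by countable_datatype
instance atkind :: countable by countable_datatype

datatype task =
  TLAnd nat form form | TRAnd nat form form | TLOr nat form form | TROr nat form form
| TLImp nat form form | TRImp nat form form
| TLAll nat nlabel form | TRAll nlabel form | TLEx nlabel form | TREx nat nlabel form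
| TRCond nat form form | TLCond nat nlabel form form | TRBar nat nlabel nlabel form form
| TLBar nat nlabel form form
| TRef nlabel | TTr nlabel nlabel nlabel | TLSub nat nlabel nlabel
| TN nat | T0 nlabel nat | TT nat | TW nlabel nat | TSingle nat | TC nlabel nat
| TRepl1 nat nat atkind | TRepl2 nat nat atkind
| TU1 nlabel nat nat nlabel nat | TU2 nlabel nat nat nlabel nat
| TA1 nlabel nat nat nlabel | TA2 nlabel nat nat nlabel

instance task :: countable by countable_datatype




lemma fin_wl_nl: "finite (wl_nl a)" by (cases a) auto
lemma fin_nv_nl: "finite (nv_nl a)" by (cases a) auto
lemma fin_wl_lf: "finite (wl_lf F)" by (cases F) (auto simp: fin_wl_nl)
lemma fin_nv_lf: "finite (nv_lf F)" by (cases F) (auto simp: fin_nv_nl)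
lemma fin_wl_seq: "finite (wl_seq G D)" unfolding wl_seq_def by (auto simp: fin_wl_lf)
lemma fin_nv_seq: "finite (nv_seq G D)" unfolding nv_seq_def by (auto simp: fin_nv_lf)

definition fw :: "lform multiset \<Rightarrow> lform multiset \<Rightarrow> nat" where
  "fw G D = Suc (Max (insert 0 (wl_seq G D)))"
definition fn :: "lform multiset \<Rightarrow> lform multiset \<Rightarrow> nat" where
  "fn G D = Suc (Max (insert 0 (nv_seq G D)))"

lemma fw_fresh: "fw G D \<notin> wl_seq G D"
proof
  assume "fw G D \<in> wl_seq G D"
  hence "fw G D \<le> Max (insert 0 (wl_seq G D))" using fin_wl_seq by auto
  thus False unfolding fw_def by simp
qed

lemma fn_fresh: "fn G D \<notin> nv_seq G D"
proof
  assume "fn G D \<in> nv_seq G D"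
  hence "fn G D \<le> Max (insert 0 (nv_seq G D))" using fin_nv_seq by auto
  thus False unfolding fn_def by simp
qed

type_synonym sq = "lform multiset \<times> lform multiset"

definition pick :: "logic \<Rightarrow> sq \<Rightarrow> sq \<Rightarrow> sq" where
  "pick L P1 P2 = (if deriv L (fst P1) (snd P1) then P2 else P1)"

lemma pick_deriv: "deriv L (fst (pick L P1 P2)) (snd (pick L P1 P2)) \<Longrightarrow>
   deriv L (fst P1) (snd P1) \<and> deriv L (fst P2) (snd P2)"
  unfolding pick_def by (auto split: if_splits)

lemma pick_cases: "pick L P1 P2 = P1 \<or> pick L P1 P2 = P2"
  unfolding pick_def by auto

fun step :: "logic \<Rightarrow> task \<Rightarrow> sq \<Rightarrow> sq" where
  "step L (TLAnd x A B) (G, D) = (if Lab x (And A B) \<in># G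
     then (add_mset (Lab x A) (add_mset (Lab x B) (G - {#Lab x (And A B)#})), D) else (G, D))"
| "step L (TRAnd x A B) (G, D) = (if Lab x (And A B) \<in># D
     then pick L (G, add_mset (Lab x A) (D - {#Lab x (And A B)#}))
                 (G, add_mset (Lab x B) (D - {#Lab x (And A B)#})) else (G, D))"
| "step L (TLOr x A B) (G, D) = (if Lab x (Or A B) \<in># G
     then pick L (add_mset (Lab x A) (G - {#Lab x (Or A B)#}), D)
                 (add_mset (Lab x B) (G - {#Lab x (Or A B)#}), D) else (G, D))"
| "step L (TROr x A B) (G, D) = (if Lab x (Or A B) \<in># D
     then (G, add_mset (Lab x A) (add_mset (Lab x B) (D - {#Lab x (Or A B)#}))) else (G, D))"
| "step L (TLImp x A B) (G, D) = (if Lab x (Imp A B) \<in># G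
     then pick L (G - {#Lab x (Imp A B)#}, add_mset (Lab x A) D)
                 (add_mset (Lab x B) (G - {#Lab x (Imp A B)#}), D) else (G, D))"
| "step L (TRImp x A B) (G, D) = (if Lab x (Imp A B) \<in># D
     then (add_mset (Lab x A) G, add_mset (Lab x B) (D - {#Lab x (Imp A B)#})) else (G, D))"
| "step L (TLAll x a A) (G, D) = (if Mem x a \<in># G \<and> FAll a A \<in># G
     then (add_mset (Lab x A) G, D) else (G, D))"
| "step L (TRAll a A) (G, D) = (if FAll a A \<in># D
     then (add_mset (Mem (fw G D) a) G, add_mset (Lab (fw G D) A) (D - {#FAll a A#})) else (G, D))"
| "step L (TLEx a A) (G, D) = (if FEx a A \<in># G
     then (add_mset (Mem (fw G D) a) (add_mset (Lab (fw G D) A) (G - {#FEx a A#})), D) else (G, D))"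
| "step L (TREx x a A) (G, D) = (if Mem x a \<in># G \<and> FEx a A \<in># D
     then (G, add_mset (Lab x A) D) else (G, D))"
| "step L (TRCond x A B) (G, D) = (if Lab x (Cond A B) \<in># D
     then (add_mset (InN (NV (fn G D)) x) (add_mset (FEx (NV (fn G D)) A) G),
           add_mset (CondL x (NV (fn G D)) A B) (D - {#Lab x (Cond A B)#})) else (G, D))"
| "step L (TLCond x a A B) (G, D) = (if InN a x \<in># G \<and> Lab x (Cond A B) \<in># G
     then pick L (G, add_mset (FEx a A) D) (add_mset (CondL x a A B) G, D) else (G, D))"
| "step L (TRBar x a c A B) (G, D) = (if InN c x \<in># G \<and> Sub c a \<in># G \<and> CondL x a A B \<in># D
     then pick L (G, add_mset (FEx c A) D) (G, add_mset (FAll c (Imp A B)) D) else (G, D))"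
| "step L (TLBar x a A B) (G, D) = (if CondL x a A B \<in># G
     then (add_mset (InN (NV (fn G D)) x) (add_mset (Sub (NV (fn G D)) a)
            (add_mset (FEx (NV (fn G D)) A) (add_mset (FAll (NV (fn G D)) (Imp A B))
             (G - {#CondL x a A B#})))), D) else (G, D))"
| "step L (TRef a) (G, D) = (add_mset (Sub a a) G, D)"
| "step L (TTr c b a) (G, D) = (if {#Sub c b, Sub b a#} \<subseteq># G
     then (add_mset (Sub c a) G, D) else (G, D))"
| "step L (TLSub x a b) (G, D) = (if Mem x a \<in># G \<and> Sub a b \<in># G
     then (add_mset (Mem x b) G, D) else (G, D))"
| "step L (TN x) (G, D) = (if hasN L then (add_mset (InN (NV (fn G D)) x) G, D) else (G, D))"
| "step L (T0 a x) (G, D) = (if hasN L \<and> InN a x \<in># G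
     then (add_mset (Mem (fw G D) a) G, D) else (G, D))"
| "step L (TT x) (G, D) = (if hasT L
     then (add_mset (Mem x (NV (fn G D))) (add_mset (InN (NV (fn G D)) x) G), D) else (G, D))"
| "step L (TW a x) (G, D) = (if hasW L \<and> InN a x \<in># G
     then (add_mset (Mem x a) G, D) else (G, D))"
| "step L (TSingle x) (G, D) = (if hasC L \<and> InN (Sg x) x \<in># G
     then (add_mset (Mem x (Sg x)) G, D) else (G, D))"
| "step L (TC a x) (G, D) = (if hasC L \<and> InN a x \<in># G
     then (add_mset (InN (Sg x) x) (add_mset (Sub (Sg x) a) G), D) else (G, D))"
| "step L (TRepl1 y x k) (G, D) = (if hasC L \<and> {#Mem y (Sg x), At k x#} \<subseteq># G
     then (add_mset (At k y) G, D) else (G, D))"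
| "step L (TRepl2 y x k) (G, D) = (if hasC L \<and> {#Mem y (Sg x), At k y#} \<subseteq># G
     then (add_mset (At k x) G, D) else (G, D))"
| "step L (TU1 a x y b z) (G, D) = (if hasU L \<and> {InN a x, Mem y a, InN b y, Mem z b} \<subseteq> set_mset G
     then (add_mset (Mem z (NV (fn G D))) (add_mset (InN (NV (fn G D)) x) G), D) else (G, D))"
| "step L (TU2 a x y b z) (G, D) = (if hasU L \<and> {InN a x, Mem y a, InN b x, Mem z b} \<subseteq> set_mset G
     then (add_mset (Mem z (NV (fn G D))) (add_mset (InN (NV (fn G D)) y) G), D) else (G, D))"
| "step L (TA1 a x y b) (G, D) = (if hasA L \<and> {InN a x, Mem y a, InN b x} \<subseteq> set_mset G
     then (add_mset (InN b y) G, D) else (G, D))"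
| "step L (TA2 a x y b) (G, D) = (if hasA L \<and> {#InN a x, Mem y a, InN b y#} \<subseteq># G
     then (add_mset (InN b x) G, D) else (G, D))"




lemma ex_rest: "F \<in># G \<Longrightarrow> \<exists>G0. G = add_mset F G0"
  by (metis insert_DiffM)

lemma ex_rest2: "M \<subseteq># G \<Longrightarrow> \<exists>G0. G = M + G0"
  by (metis subset_mset.add_diff_inverse)

lemmas SS = step.simps if_True if_False simp_thms fst_conv snd_conv

lemma pd: "deriv L (fst (pick L (G1, D1) (G2, D2))) (snd (pick L (G1, D1) (G2, D2))) \<Longrightarrow>
   deriv L G1 D1 \<and> deriv L G2 D2"
  using pick_deriv[of L "(G1, D1)" "(G2, D2)"] by simp

lemma step_sound:
  assumes "deriv L (fst (step L t (G, D))) (snd (step L t (G, D)))"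
  shows "deriv L G D"
proof (cases t)
  case (TLAnd x A B)
  show ?thesis
  proof (cases "Lab x (And A B) \<in># G")
    case True
    then obtain G0 where g: "G = add_mset (Lab x (And A B)) G0" by (meson ex_rest)
    have d: "deriv L (add_mset (Lab x A) (add_mset (Lab x B) (G - {#Lab x (And A B)#}))) D"
      using assms True unfolding TLAnd by (simp only: SS)
    have "deriv L ({#Lab x A, Lab x B#} + G0) D" using d unfolding g by simp
    thus ?thesis unfolding g by (rule deriv.LAnd)
  next
    case False thus ?thesis using assms unfolding TLAnd by (simp only: SS)
  qed
next
  case (TRAnd x A B)
  show ?thesis
  proof (cases "Lab x (And A B) \<in># D")
    case True
    then obtain D0 where g: "D = add_mset (Lab x (And A B)) D0" by (meson ex_rest)
    have d: "deriv L G (add_mset (Lab x A) (D - {#Lab x (And A B)#})) \<and> deriv L G (add_mset (Lab x B) (D - {#Lab x (And A B)#}))"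
      using assms True unfolding TRAnd by (intro pd) (simp only: SS)
    have "deriv L G (add_mset (Lab x A) D0)" "deriv L G (add_mset (Lab x B) D0)"
      using d unfolding g by simp_all
    thus ?thesis unfolding g by (rule deriv.RAnd)
  next
    case False thus ?thesis using assms unfolding TRAnd by (simp only: SS)
  qed
next
  case (TLOr x A B)
  show ?thesis
  proof (cases "Lab x (Or A B) \<in># G")
    case True
    then obtain G0 where g: "G = add_mset (Lab x (Or A B)) G0" by (meson ex_rest)
    have d: "deriv L (add_mset (Lab x A) (G - {#Lab x (Or A B)#})) D \<and> deriv L (add_mset (Lab x B) (G - {#Lab x (Or A B)#})) D"
      using assms True unfolding TLOr by (intro pd) (simp only: SS)
    have "deriv L (add_mset (Lab x A) G0) D" "deriv L (add_mset (Lab x B) G0) D"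
      using d unfolding g by simp_all
    thus ?thesis unfolding g by (rule deriv.LOr)
  next
    case False thus ?thesis using assms unfolding TLOr by (simp only: SS)
  qed
next
  case (TROr x A B)
  show ?thesis
  proof (cases "Lab x (Or A B) \<in># D")
    case True
    then obtain D0 where g: "D = add_mset (Lab x (Or A B)) D0" by (meson ex_rest)
    have d: "deriv L G (add_mset (Lab x A) (add_mset (Lab x B) (D - {#Lab x (Or A B)#})))"
      using assms True unfolding TROr by (simp only: SS)
    have "deriv L G ({#Lab x A, Lab x B#} + D0)" using d unfolding g by simp
    thus ?thesis unfolding g by (rule deriv.ROr)
  next
    case False thus ?thesis using assms unfolding TROr by (simp only: SS)
  qed
next
  case (TLImp x A B)
  show ?thesis
  proof (cases "Lab x (Imp A B) \<in># G")
    case True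
    then obtain G0 where g: "G = add_mset (Lab x (Imp A B)) G0" by (meson ex_rest)
    have d: "deriv L (G - {#Lab x (Imp A B)#}) (add_mset (Lab x A) D) \<and> deriv L (add_mset (Lab x B) (G - {#Lab x (Imp A B)#})) D"
      using assms True unfolding TLImp by (intro pd) (simp only: SS)
    have "deriv L G0 (add_mset (Lab x A) D)" "deriv L (add_mset (Lab x B) G0) D"
      using d unfolding g by simp_all
    thus ?thesis unfolding g by (rule deriv.LImp)
  next
    case False thus ?thesis using assms unfolding TLImp by (simp only: SS)
  qed
next
  case (TRImp x A B)
  show ?thesis
  proof (cases "Lab x (Imp A B) \<in># D")
    case True
    then obtain D0 where g: "D = add_mset (Lab x (Imp A B)) D0" by (meson ex_rest)
    have d: "deriv L (add_mset (Lab x A) G) (add_mset (Lab x B) (D - {#Lab x (Imp A B)#}))"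
      using assms True unfolding TRImp by (simp only: SS)
    have "deriv L (add_mset (Lab x A) G) (add_mset (Lab x B) D0)" using d unfolding g by simp
    thus ?thesis unfolding g by (rule deriv.RImp)
  next
    case False thus ?thesis using assms unfolding TRImp by (simp only: SS)
  qed
next
  case (TLAll x a A)
  show ?thesis
  proof (cases "Mem x a \<in># G \<and> FAll a A \<in># G")
    case True
    then obtain G1 where g1: "G = add_mset (Mem x a) G1" by (meson ex_rest)
    with True have "FAll a A \<in># G1" by auto
    then obtain G0 where g0: "G1 = add_mset (FAll a A) G0" by (meson ex_rest)
    have d: "deriv L (add_mset (Lab x A) G) D" using assms True unfolding TLAll by (simp only: SS)
    have "deriv L ({#Lab x A, Mem x a, FAll a A#} + G0) D" using d unfolding g1 g0 by simp
    hence "deriv L ({#Mem x a, FAll a A#} + G0) D" by (rule deriv.LAll)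
    thus ?thesis unfolding g1 g0 by simp
  next
    case False thus ?thesis using assms unfolding TLAll by (simp only: SS)
  qed
next
  case (TRAll a A)
  show ?thesis
  proof (cases "FAll a A \<in># D")
    case True
    then obtain D0 where g: "D = add_mset (FAll a A) D0" by (meson ex_rest)
    have d: "deriv L (add_mset (Mem (fw G D) a) G) (add_mset (Lab (fw G D) A) (D - {#FAll a A#}))"
      using assms True unfolding TRAll by (simp only: SS)
    have "deriv L (add_mset (Mem (fw G D) a) G) (add_mset (Lab (fw G D) A) D0)"
      using d g by simp
    moreover have "fw G D \<notin> wl_seq G (add_mset (FAll a A) D0)" using fw_fresh[of G D] g by simp
    ultimately show ?thesis unfolding g by (rule deriv.RAll[rotated])
  next
    case False thus ?thesis using assms unfolding TRAll by (simp only: SS)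
  qed
next
  case (TLEx a A)
  show ?thesis
  proof (cases "FEx a A \<in># G")
    case True
    then obtain G0 where g: "G = add_mset (FEx a A) G0" by (meson ex_rest)
    have d: "deriv L (add_mset (Mem (fw G D) a) (add_mset (Lab (fw G D) A) (G - {#FEx a A#}))) D"
      using assms True unfolding TLEx by (simp only: SS)
    have "deriv L ({#Mem (fw G D) a, Lab (fw G D) A#} + G0) D" using d g by simp
    moreover have "fw G D \<notin> wl_seq (add_mset (FEx a A) G0) D" using fw_fresh[of G D] g by simp
    ultimately show ?thesis unfolding g by (rule deriv.LEx[rotated])
  next
    case False thus ?thesis using assms unfolding TLEx by (simp only: SS)
  qed
next
  case (TREx x a A)
  show ?thesis
  proof (cases "Mem x a \<in># G \<and> FEx a A \<in># D")
    case True
    then obtain G0 D0 where g: "G = add_mset (Mem x a) G0" "D = add_mset (FEx a A) D0" by (meson ex_rest)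
    have d: "deriv L G (add_mset (Lab x A) D)" using assms True unfolding TREx by (simp only: SS)
    have "deriv L (add_mset (Mem x a) G0) ({#Lab x A, FEx a A#} + D0)" using d unfolding g by simp
    thus ?thesis unfolding g by (rule deriv.REx)
  next
    case False thus ?thesis using assms unfolding TREx by (simp only: SS)
  qed
next
  case (TRCond x A B)
  show ?thesis
  proof (cases "Lab x (Cond A B) \<in># D")
    case True
    then obtain D0 where g: "D = add_mset (Lab x (Cond A B)) D0" by (meson ex_rest)
    have d: "deriv L (add_mset (InN (NV (fn G D)) x) (add_mset (FEx (NV (fn G D)) A) G))
           (add_mset (CondL x (NV (fn G D)) A B) (D - {#Lab x (Cond A B)#}))"
      using assms True unfolding TRCond by (simp only: SS)
    have "deriv L ({#InN (NV (fn G D)) x, FEx (NV (fn G D)) A#} + G) (add_mset (CondL x (NV (fn G D)) A B) D0)"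
      using d g by simp
    moreover have "fn G D \<notin> nv_seq G (add_mset (Lab x (Cond A B)) D0)" using fn_fresh[of G D] g by simp
    ultimately show ?thesis unfolding g by (rule deriv.RCond[rotated])
  next
    case False thus ?thesis using assms unfolding TRCond by (simp only: SS)
  qed
next
  case (TLCond x a A B)
  show ?thesis
  proof (cases "InN a x \<in># G \<and> Lab x (Cond A B) \<in># G")
    case True
    then obtain G1 where g1: "G = add_mset (InN a x) G1" by (meson ex_rest)
    with True have "Lab x (Cond A B) \<in># G1" by auto
    then obtain G0 where g0: "G1 = add_mset (Lab x (Cond A B)) G0" by (meson ex_rest)
    have d: "deriv L G (add_mset (FEx a A) D) \<and> deriv L (add_mset (CondL x a A B) G) D"
      using assms True unfolding TLCond by (intro pd) (simp only: SS)
    hence "deriv L ({#InN a x, Lab x (Cond A B)#} + G0) (add_mset (FEx a A) D)"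
      "deriv L ({#CondL x a A B, InN a x, Lab x (Cond A B)#} + G0) D" unfolding g1 g0 by simp_all
    hence "deriv L ({#InN a x, Lab x (Cond A B)#} + G0) D" by (rule deriv.LCond)
    thus ?thesis unfolding g1 g0 by simp
  next
    case False thus ?thesis using assms unfolding TLCond by (simp only: SS)
  qed
next
  case (TRBar x a c A B)
  show ?thesis
  proof (cases "InN c x \<in># G \<and> Sub c a \<in># G \<and> CondL x a A B \<in># D")
    case True
    then obtain G1 where g1: "G = add_mset (InN c x) G1" by (meson ex_rest)
    with True have "Sub c a \<in># G1" by auto
    then obtain G0 where g0: "G1 = add_mset (Sub c a) G0" by (meson ex_rest)
    obtain D0 where d0: "D = add_mset (CondL x a A B) D0" using True by (meson ex_rest)
    have d: "deriv L G (add_mset (FEx c A) D) \<and> deriv L G (add_mset (FAll c (Imp A B)) D)"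
      using assms True unfolding TRBar by (intro pd) (simp only: SS)
    hence "deriv L ({#InN c x, Sub c a#} + G0) ({#CondL x a A B, FEx c A#} + D0)"
      "deriv L ({#InN c x, Sub c a#} + G0) ({#CondL x a A B, FAll c (Imp A B)#} + D0)"
      unfolding g1 g0 d0 by (simp_all add: add_mset_commute)
    hence "deriv L ({#InN c x, Sub c a#} + G0) (add_mset (CondL x a A B) D0)" by (rule deriv.RBar)
    thus ?thesis unfolding g1 g0 d0 by simp
  next
    case False thus ?thesis using assms unfolding TRBar by (simp only: SS)
  qed
next
  case (TLBar x a A B)
  show ?thesis
  proof (cases "CondL x a A B \<in># G")
    case True
    then obtain G0 where g: "G = add_mset (CondL x a A B) G0" by (meson ex_rest)
    have d: "deriv L (add_mset (InN (NV (fn G D)) x) (add_mset (Sub (NV (fn G D)) a)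
            (add_mset (FEx (NV (fn G D)) A) (add_mset (FAll (NV (fn G D)) (Imp A B))
             (G - {#CondL x a A B#}))))) D"
      using assms True unfolding TLBar by (simp only: SS)
    have "deriv L ({#InN (NV (fn G D)) x, Sub (NV (fn G D)) a, FEx (NV (fn G D)) A, FAll (NV (fn G D)) (Imp A B)#} + G0) D"
      using d g by simp
    moreover have "fn G D \<notin> nv_seq (add_mset (CondL x a A B) G0) D" using fn_fresh[of G D] g by simp
    ultimately show ?thesis unfolding g by (rule deriv.LBar[rotated])
  next
    case False thus ?thesis using assms unfolding TLBar by (simp only: SS)
  qed
next
  case (TRef a)
  have "deriv L (add_mset (Sub a a) G) D" using assms unfolding TRef by (simp only: SS)
  thus ?thesis by (rule deriv.Ref)
next
  case (TTr c b a)
  show ?thesis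
  proof (cases "{#Sub c b, Sub b a#} \<subseteq># G")
    case True
    then obtain G0 where g: "G = {#Sub c b, Sub b a#} + G0" by (meson ex_rest2)
    have d: "deriv L (add_mset (Sub c a) G) D" using assms True unfolding TTr by (simp only: SS)
    have "deriv L ({#Sub c a, Sub c b, Sub b a#} + G0) D" using d unfolding g by simp
    thus ?thesis unfolding g by (rule deriv.Tr)
  next
    case False thus ?thesis using assms unfolding TTr by (simp only: SS)
  qed
next
  case (TLSub x a b)
  show ?thesis
  proof (cases "Mem x a \<in># G \<and> Sub a b \<in># G")
    case True
    then obtain G1 where g1: "G = add_mset (Mem x a) G1" by (meson ex_rest)
    with True have "Sub a b \<in># G1" by auto
    then obtain G0 where g0: "G1 = add_mset (Sub a b) G0" by (meson ex_rest)
    have d: "deriv L (add_mset (Mem x b) G) D" using assms True unfolding TLSub by (simp only: SS)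
    have "deriv L ({#Mem x a, Sub a b, Mem x b#} + G0) D" using d unfolding g1 g0
      by (simp add: add_mset_commute)
    hence "deriv L ({#Mem x a, Sub a b#} + G0) D" by (rule deriv.LSub)
    thus ?thesis unfolding g1 g0 by simp
  next
    case False thus ?thesis using assms unfolding TLSub by (simp only: SS)
  qed
next
  case (TN x)
  show ?thesis
  proof (cases "hasN L")
    case True
    have "deriv L (add_mset (InN (NV (fn G D)) x) G) D" using assms True unfolding TN by (simp only: SS)
    thus ?thesis by (rule deriv.RuleN[OF True fn_fresh])
  next
    case False thus ?thesis using assms unfolding TN by (simp only: SS)
  qed
next
  case (T0 a x)
  show ?thesis
  proof (cases "hasN L \<and> InN a x \<in># G")
    case True
    then obtain G0 where g: "G = add_mset (InN a x) G0" by (meson ex_rest)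
    have d: "deriv L (add_mset (Mem (fw G D) a) G) D" using assms True unfolding T0 by (simp only: SS)
    have "deriv L ({#Mem (fw G D) a, InN a x#} + G0) D" using d g by simp
    moreover have "fw G D \<notin> wl_seq (add_mset (InN a x) G0) D" using fw_fresh[of G D] g by simp
    ultimately show ?thesis unfolding g using True by (metis deriv.Rule0)
  next
    case False thus ?thesis using assms unfolding T0 by (simp only: SS)
  qed
next
  case (TT x)
  show ?thesis
  proof (cases "hasT L")
    case True
    have d: "deriv L (add_mset (Mem x (NV (fn G D))) (add_mset (InN (NV (fn G D)) x) G)) D"
      using assms True unfolding TT by (simp only: SS)
    have "deriv L ({#Mem x (NV (fn G D)), InN (NV (fn G D)) x#} + G) D" using d by simp
    thus ?thesis by (rule deriv.RuleT[OF True fn_fresh])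
  next
    case False thus ?thesis using assms unfolding TT by (simp only: SS)
  qed
next
  case (TW a x)
  show ?thesis
  proof (cases "hasW L \<and> InN a x \<in># G")
    case True
    then obtain G0 where g: "G = add_mset (InN a x) G0" by (meson ex_rest)
    have d: "deriv L (add_mset (Mem x a) G) D" using assms True unfolding TW by (simp only: SS)
    have "deriv L ({#Mem x a, InN a x#} + G0) D" using d unfolding g by simp
    thus ?thesis unfolding g using True by (metis deriv.RuleW)
  next
    case False thus ?thesis using assms unfolding TW by (simp only: SS)
  qed
next
  case (TSingle x)
  show ?thesis
  proof (cases "hasC L \<and> InN (Sg x) x \<in># G")
    case True
    then obtain G0 where g: "G = add_mset (InN (Sg x) x) G0" by (meson ex_rest)
    have d: "deriv L (add_mset (Mem x (Sg x)) G) D" using assms True unfolding TSingle by (simp only: SS)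
    have "deriv L ({#Mem x (Sg x), InN (Sg x) x#} + G0) D" using d unfolding g by simp
    thus ?thesis unfolding g using True by (metis deriv.Single)
  next
    case False thus ?thesis using assms unfolding TSingle by (simp only: SS)
  qed
next
  case (TC a x)
  show ?thesis
  proof (cases "hasC L \<and> InN a x \<in># G")
    case True
    then obtain G0 where g: "G = add_mset (InN a x) G0" by (meson ex_rest)
    have d: "deriv L (add_mset (InN (Sg x) x) (add_mset (Sub (Sg x) a) G)) D"
      using assms True unfolding TC by (simp only: SS)
    have "deriv L ({#InN (Sg x) x, Sub (Sg x) a, InN a x#} + G0) D" using d unfolding g by simp
    thus ?thesis unfolding g using True by (metis deriv.RuleC)
  next
    case False thus ?thesis using assms unfolding TC by (simp only: SS)
  qed
next
  case (TRepl1 y x k)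
  show ?thesis
  proof (cases "hasC L \<and> {#Mem y (Sg x), At k x#} \<subseteq># G")
    case True
    then obtain G0 where g: "G = {#Mem y (Sg x), At k x#} + G0" by (meson ex_rest2)
    have d: "deriv L (add_mset (At k y) G) D" using assms True unfolding TRepl1 by (simp only: SS)
    have "deriv L ({#Mem y (Sg x), At k x, At k y#} + G0) D" using d unfolding g
      by (simp add: add_mset_commute)
    thus ?thesis unfolding g using True by (metis deriv.Repl1)
  next
    case False thus ?thesis using assms unfolding TRepl1 by (simp only: SS)
  qed
next
  case (TRepl2 y x k)
  show ?thesis
  proof (cases "hasC L \<and> {#Mem y (Sg x), At k y#} \<subseteq># G")
    case True
    then obtain G0 where g: "G = {#Mem y (Sg x), At k y#} + G0" by (meson ex_rest2)
    have d: "deriv L (add_mset (At k x) G) D" using assms True unfolding TRepl2 by (simp only: SS)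
    have "deriv L ({#Mem y (Sg x), At k x, At k y#} + G0) D" using d unfolding g
      by (simp add: add_mset_commute)
    thus ?thesis unfolding g using True by (metis deriv.Repl2)
  next
    case False thus ?thesis using assms unfolding TRepl2 by (simp only: SS)
  qed
next
  case (TU1 a x y b z)
  show ?thesis
  proof (cases "hasU L \<and> {InN a x, Mem y a, InN b y, Mem z b} \<subseteq> set_mset G")
    case True
    have d: "deriv L (add_mset (Mem z (NV (fn G D))) (add_mset (InN (NV (fn G D)) x) G)) D"
      using assms True unfolding TU1 by (simp only: SS)
    have "deriv L ({#Mem z (NV (fn G D)), InN (NV (fn G D)) x#} + G) D" using d by simp
    thus ?thesis by (rule deriv.RuleU1[OF conjunct1[OF True] fn_fresh conjunct2[OF True]])
  next
    case False thus ?thesis using assms unfolding TU1 by (simp only: SS)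
  qed
next
  case (TU2 a x y b z)
  show ?thesis
  proof (cases "hasU L \<and> {InN a x, Mem y a, InN b x, Mem z b} \<subseteq> set_mset G")
    case True
    have d: "deriv L (add_mset (Mem z (NV (fn G D))) (add_mset (InN (NV (fn G D)) y) G)) D"
      using assms True unfolding TU2 by (simp only: SS)
    have "deriv L ({#Mem z (NV (fn G D)), InN (NV (fn G D)) y#} + G) D" using d by simp
    thus ?thesis by (rule deriv.RuleU2[OF conjunct1[OF True] fn_fresh conjunct2[OF True]])
  next
    case False thus ?thesis using assms unfolding TU2 by (simp only: SS)
  qed
next
  case (TA1 a x y b)
  show ?thesis
  proof (cases "hasA L \<and> {InN a x, Mem y a, InN b x} \<subseteq> set_mset G")
    case True
    have "deriv L (add_mset (InN b y) G) D" using assms True unfolding TA1 by (simp only: SS)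
    thus ?thesis by (rule deriv.RuleA1[OF conjunct1[OF True] conjunct2[OF True]])
  next
    case False thus ?thesis using assms unfolding TA1 by (simp only: SS)
  qed
next
  case (TA2 a x y b)
  show ?thesis
  proof (cases "hasA L \<and> {#InN a x, Mem y a, InN b y#} \<subseteq># G")
    case True
    then obtain G0 where g: "G = {#InN a x, Mem y a, InN b y#} + G0" by (meson ex_rest2)
    have d: "deriv L (add_mset (InN b x) G) D" using assms True unfolding TA2 by (simp only: SS)
    have "deriv L ({#InN b x, InN a x, Mem y a, InN b y#} + G0) D" using d unfolding g by simp
    thus ?thesis unfolding g using True by (metis deriv.RuleA2)
  next
    case False thus ?thesis using assms unfolding TA2 by (simp only: SS)
  qed
qed




definition taskOf :: "nat \<Rightarrow> task" where "taskOf k = from_nat (fst (prod_decode k))"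

lemma fair: "\<exists>j\<ge>k. taskOf j = t"
proof (intro exI conjI)
  show "k \<le> prod_encode (to_nat t, k)" by (rule le_prod_encode_2)
  show "taskOf (prod_encode (to_nat t, k)) = t" unfolding taskOf_def by simp
qed

primrec run :: "logic \<Rightarrow> sq \<Rightarrow> nat \<Rightarrow> sq" where
  "run L s0 0 = s0"
| "run L s0 (Suc k) = step L (taskOf k) (run L s0 k)"

fun delL :: "task \<Rightarrow> lform set" where
  "delL (TLAnd x A B) = {Lab x (And A B)}"
| "delL (TLOr x A B) = {Lab x (Or A B)}"
| "delL (TLImp x A B) = {Lab x (Imp A B)}"
| "delL (TLEx a A) = {FEx a A}"
| "delL (TLBar x a A B) = {CondL x a A B}"
| "delL _ = {}"

fun delR :: "task \<Rightarrow> lform set" where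
  "delR (TRAnd x A B) = {Lab x (And A B)}"
| "delR (TROr x A B) = {Lab x (Or A B)}"
| "delR (TRImp x A B) = {Lab x (Imp A B)}"
| "delR (TRAll a A) = {FAll a A}"
| "delR (TRCond x A B) = {Lab x (Cond A B)}"
| "delR _ = {}"

lemma pick_fst: "F \<in># fst P1 \<Longrightarrow> F \<in># fst P2 \<Longrightarrow> F \<in># fst (pick L P1 P2)"
  unfolding pick_def by simp
lemma pick_snd: "F \<in># snd P1 \<Longrightarrow> F \<in># snd P2 \<Longrightarrow> F \<in># snd (pick L P1 P2)"
  unfolding pick_def by simp

lemma mem_diff: "F \<in># G \<Longrightarrow> F \<noteq> P \<Longrightarrow> F \<in># G - {#P#}"
  by (simp add: in_diff_count)

lemma step_keepL: "F \<in># G \<Longrightarrow> F \<notin> delL t \<Longrightarrow> F \<in># fst (step L t (G, D))"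
  by (cases t) (auto simp: mem_diff intro!: pick_fst)

lemma step_keepR: "F \<in># D \<Longrightarrow> F \<notin> delR t \<Longrightarrow> F \<in># snd (step L t (G, D))"
  by (cases t) (auto simp: mem_diff intro!: pick_snd)


definition persL :: "lform \<Rightarrow> bool" where "persL F \<longleftrightarrow> (\<forall>t. F \<notin> delL t)"
definition persR :: "lform \<Rightarrow> bool" where "persR F \<longleftrightarrow> (\<forall>t. F \<notin> delR t)"

lemma persL_simps: "persL (InN a x)" "persL (Mem x a)" "persL (Sub a b)" "persL (Lab x (Atom p))"
  "persL (Lab x Bot)" "persL (Lab x (Cond A B))" "persL (FAll a A)"
  unfolding persL_def by (intro allI, case_tac t, simp_all)+

lemma persR_simps: "persR (Lab x (Atom p))" "persR (FEx a A)" "persR (CondL x a A B)"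
  unfolding persR_def by (intro allI, case_tac t, simp_all)+

lemma uL: "Lab x (And A B) \<in> delL t \<Longrightarrow> t = TLAnd x A B"
  "Lab x (Or A B) \<in> delL t \<Longrightarrow> t = TLOr x A B"
  "Lab x (Imp A B) \<in> delL t \<Longrightarrow> t = TLImp x A B"
  "FEx a A \<in> delL t \<Longrightarrow> t = TLEx a A"
  "CondL x a A B \<in> delL t \<Longrightarrow> t = TLBar x a A B"
  by (cases t; simp)+

lemma uR: "Lab x (And A B) \<in> delR t \<Longrightarrow> t = TRAnd x A B"
  "Lab x (Or A B) \<in> delR t \<Longrightarrow> t = TROr x A B"
  "Lab x (Imp A B) \<in> delR t \<Longrightarrow> t = TRImp x A B"
  "FAll a A \<in> delR t \<Longrightarrow> t = TRAll a A"
  "Lab x (Cond A B) \<in> delR t \<Longrightarrow> t = TRCond x A B"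
  by (cases t; simp)+

locale canon =
  fixes L :: logic and s0 :: sq
  assumes nd: "\<not> deriv L (fst s0) (snd s0)"
begin

abbreviation Gs :: "nat \<Rightarrow> lform multiset" where "Gs k \<equiv> fst (run L s0 k)"
abbreviation Ds :: "nat \<Rightarrow> lform multiset" where "Ds k \<equiv> snd (run L s0 k)"

definition GI :: "lform set" where "GI = {F. \<exists>k. F \<in># Gs k}"
definition DI :: "lform set" where "DI = {F. \<exists>k. F \<in># Ds k}"

lemma inGI: "F \<in># Gs k \<Longrightarrow> F \<in> GI" unfolding GI_def by blast
lemma inDI: "F \<in># Ds k \<Longrightarrow> F \<in> DI" unfolding DI_def by blast

lemma at_task: "taskOf j = t \<Longrightarrow> run L s0 (Suc j) = step L t (Gs j, Ds j)"
  by simp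

lemma nd_k: "\<not> deriv L (Gs k) (Ds k)"
proof (induction k)
  case 0 thus ?case using nd by simp
next
  case (Suc k)
  show ?case
  proof
    assume "deriv L (Gs (Suc k)) (Ds (Suc k))"
    hence "deriv L (fst (step L (taskOf k) (Gs k, Ds k))) (snd (step L (taskOf k) (Gs k, Ds k)))"
      by simp
    hence "deriv L (Gs k) (Ds k)" by (rule step_sound)
    thus False using Suc by simp
  qed
qed

lemma keepL1: "F \<in># Gs j \<Longrightarrow> F \<notin> delL (taskOf j) \<Longrightarrow> F \<in># Gs (Suc j)"
  using step_keepL[of F "Gs j" "taskOf j" L "Ds j"] by simp
lemma keepR1: "F \<in># Ds j \<Longrightarrow> F \<notin> delR (taskOf j) \<Longrightarrow> F \<in># Ds (Suc j)"
  using step_keepR[of F "Ds j" "taskOf j" L "Gs j"] by simp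

lemma persistL: assumes "F \<in># Gs k" "persL F" "k \<le> j" shows "F \<in># Gs j"
  using assms(3)
proof (induction j rule: dec_induct)
  case base thus ?case using assms(1) .
next
  case (step n) thus ?case using keepL1 assms(2) unfolding persL_def by blast
qed

lemma persistR: assumes "F \<in># Ds k" "persR F" "k \<le> j" shows "F \<in># Ds j"
  using assms(3)
proof (induction j rule: dec_induct)
  case base thus ?case using assms(1) .
next
  case (step n) thus ?case using keepR1 assms(2) unfolding persR_def by blast
qed

lemma evL: "F \<in> GI \<Longrightarrow> persL F \<Longrightarrow> \<exists>k. \<forall>j\<ge>k. F \<in># Gs j"
  unfolding GI_def using persistL by blast
lemma evR: "F \<in> DI \<Longrightarrow> persR F \<Longrightarrow> \<exists>k. \<forall>j\<ge>k. F \<in># Ds j"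
  unfolding DI_def using persistR by blast

lemma next_occ_gen:
  assumes "P k" "\<And>j. P j \<Longrightarrow> taskOf j \<noteq> t \<Longrightarrow> P (Suc j)"
  shows "\<exists>j\<ge>k. taskOf j = t \<and> P j"
proof -
  obtain m where m: "m \<ge> k" "taskOf m = t" using fair by blast
  have "\<forall>k'. m - k' = d \<longrightarrow> k' \<le> m \<longrightarrow> P k' \<longrightarrow> (\<exists>j\<ge>k'. taskOf j = t \<and> P j)" for d
  proof (induction d)
    case 0 thus ?case using m by (metis diff_is_0_eq le_antisym order_refl)
  next
    case (Suc d)
    show ?case
    proof (intro allI impI)
      fix k' assume h: "m - k' = Suc d" "k' \<le> m" "P k'"
      show "\<exists>j\<ge>k'. taskOf j = t \<and> P j"
      proof (cases "taskOf k' = t")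
        case True thus ?thesis using h by blast
      next
        case False
        hence "P (Suc k')" using assms(2) h by blast
        moreover have "m - Suc k' = d" "Suc k' \<le> m" using h by auto
        ultimately obtain j where "j \<ge> Suc k'" "taskOf j = t" "P j" using Suc.IH by blast
        thus ?thesis by (intro exI[of _ j]) auto
      qed
    qed
  qed
  thus ?thesis using assms(1) m by blast
qed

lemma next_occL:
  assumes "F \<in># Gs k" "\<And>t'. F \<in> delL t' \<Longrightarrow> t' = t"
  shows "\<exists>j. taskOf j = t \<and> F \<in># Gs j"
  using next_occ_gen[of "\<lambda>j. F \<in># Gs j" k t] assms keepL1 by blast

lemma next_occR:
  assumes "F \<in># Ds k" "\<And>t'. F \<in> delR t' \<Longrightarrow> t' = t"
  shows "\<exists>j. taskOf j = t \<and> F \<in># Ds j"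
  using next_occ_gen[of "\<lambda>j. F \<in># Ds j" k t] assms keepR1 by blast

lemma obtGI: "F \<in> GI \<Longrightarrow> \<exists>k. F \<in># Gs k" unfolding GI_def by blast
lemma obtDI: "F \<in> DI \<Longrightarrow> \<exists>k. F \<in># Ds k" unfolding DI_def by blast

end



lemma sub2: "x \<in># M \<Longrightarrow> y \<in># M \<Longrightarrow> x \<noteq> y \<Longrightarrow> {#x, y#} \<subseteq># M"
  by (simp add: insert_subset_eq_iff mem_diff)

lemma sub3: assumes "x \<in># M" "y \<in># M" "z \<in># M" "x \<noteq> y" "x \<noteq> z" "y \<noteq> z" shows "{#x, y, z#} \<subseteq># M"
proof -
  have "{#y, z#} \<subseteq># M - {#x#}" using assms by (intro sub2) (simp_all add: mem_diff)
  thus ?thesis using assms(1) by (simp add: insert_subset_eq_iff)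
qed

lemma persL_At: "persL (At k x)"
  by (cases k) (simp_all add: persL_simps)

lemma pick_or: "Q P1 \<Longrightarrow> R P2 \<Longrightarrow> Q (pick L P1 P2) \<or> R (pick L P1 P2)"
  unfolding pick_def by auto

context canon
begin

lemma evLs: "(\<forall>F\<in>set Fs. F \<in> GI \<and> persL F) \<Longrightarrow> \<exists>k. \<forall>j\<ge>k. \<forall>F\<in>set Fs. F \<in># Gs j"
proof (induction Fs)
  case Nil thus ?case by simp
next
  case (Cons F Fs)
  then obtain k1 where k1: "\<forall>j\<ge>k1. \<forall>F\<in>set Fs. F \<in># Gs j" by auto
  have "F \<in> GI" "persL F" using Cons.prems by auto
  then obtain k2 where k2: "\<forall>j\<ge>k2. F \<in># Gs j" using evL by blast
  show ?case using k1 k2 by (intro exI[of _ "max k1 k2"]) auto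
qed

lemma fairL: "(\<forall>F\<in>set Fs. F \<in> GI \<and> persL F) \<Longrightarrow> \<exists>j. taskOf j = t \<and> (\<forall>F\<in>set Fs. F \<in># Gs j)"
proof -
  assume "\<forall>F\<in>set Fs. F \<in> GI \<and> persL F"
  then obtain k where k: "\<forall>j\<ge>k. \<forall>F\<in>set Fs. F \<in># Gs j" using evLs by blast
  obtain j where "j \<ge> k" "taskOf j = t" using fair by blast
  thus ?thesis using k by blast
qed

lemma fairLR: "(\<forall>F\<in>set Fs. F \<in> GI \<and> persL F) \<Longrightarrow> (\<forall>F\<in>set Hs. F \<in> DI \<and> persR F) \<Longrightarrow>
   \<exists>j. taskOf j = t \<and> (\<forall>F\<in>set Fs. F \<in># Gs j) \<and> (\<forall>F\<in>set Hs. F \<in># Ds j)"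
proof -
  assume a: "\<forall>F\<in>set Fs. F \<in> GI \<and> persL F" "\<forall>F\<in>set Hs. F \<in> DI \<and> persR F"
  then obtain k where k: "\<forall>j\<ge>k. \<forall>F\<in>set Fs. F \<in># Gs j" using evLs by blast
  have "\<exists>k. \<forall>j\<ge>k. \<forall>F\<in>set Hs. F \<in># Ds j" using a(2)
  proof (induction Hs)
    case Nil thus ?case by simp
  next
    case (Cons F Hs)
    then obtain k1 where k1: "\<forall>j\<ge>k1. \<forall>F\<in>set Hs. F \<in># Ds j" by auto
    have "F \<in> DI" "persR F" using Cons.prems by auto
    then obtain k2 where k2: "\<forall>j\<ge>k2. F \<in># Ds j" using evR by blast
    show ?case using k1 k2 by (intro exI[of _ "max k1 k2"]) auto
  qed
  then obtain k' where k': "\<forall>j\<ge>k'. \<forall>F\<in>set Hs. F \<in># Ds j" by blast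
  obtain j where "j \<ge> max k k'" "taskOf j = t" using fair by blast
  thus ?thesis using k k' by (intro exI[of _ j]) auto
qed

lemma satLAnd: assumes "Lab x (And A B) \<in> GI" shows "Lab x A \<in> GI \<and> Lab x B \<in> GI"
proof -
  obtain k where "Lab x (And A B) \<in># Gs k" using obtGI[OF assms] by blast
  then obtain j where j: "taskOf j = TLAnd x A B" "Lab x (And A B) \<in># Gs j"
    using next_occL[OF _ uL(1)] by blast
  have "Gs (Suc j) = add_mset (Lab x A) (add_mset (Lab x B) (Gs j - {#Lab x (And A B)#}))"
    using at_task[OF j(1)] j(2) by (simp only: SS)
  hence "Lab x A \<in># Gs (Suc j)" "Lab x B \<in># Gs (Suc j)" by simp_all
  thus ?thesis using inGI by blast
qed

lemma satLOr: assumes "Lab x (Or A B) \<in> GI" shows "Lab x A \<in> GI \<or> Lab x B \<in> GI"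
proof -
  obtain k where "Lab x (Or A B) \<in># Gs k" using obtGI[OF assms] by blast
  then obtain j where j: "taskOf j = TLOr x A B" "Lab x (Or A B) \<in># Gs j"
    using next_occL[OF _ uL(2)] by blast
  have e: "run L s0 (Suc j) = pick L (add_mset (Lab x A) (Gs j - {#Lab x (Or A B)#}), Ds j)
                 (add_mset (Lab x B) (Gs j - {#Lab x (Or A B)#}), Ds j)"
    using at_task[OF j(1)] j(2) by (simp only: SS)
  have "(\<lambda>S. Lab x A \<in># fst S) (pick L (add_mset (Lab x A) (Gs j - {#Lab x (Or A B)#}), Ds j)
                 (add_mset (Lab x B) (Gs j - {#Lab x (Or A B)#}), Ds j)) \<or> (\<lambda>S. Lab x B \<in># fst S) (pick L (add_mset (Lab x A) (Gs j - {#Lab x (Or A B)#}), Ds j)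
                 (add_mset (Lab x B) (Gs j - {#Lab x (Or A B)#}), Ds j))"
    by (rule pick_or[where Q="(\<lambda>S. Lab x A \<in># fst S)" and R="(\<lambda>S. Lab x B \<in># fst S)"]) simp_all
  hence "Lab x A \<in># Gs (Suc j) \<or> Lab x B \<in># Gs (Suc j)" by (simp only: e)
  thus ?thesis using inGI by blast
qed

lemma satLImp: assumes "Lab x (Imp A B) \<in> GI" shows "Lab x A \<in> DI \<or> Lab x B \<in> GI"
proof -
  obtain k where "Lab x (Imp A B) \<in># Gs k" using obtGI[OF assms] by blast
  then obtain j where j: "taskOf j = TLImp x A B" "Lab x (Imp A B) \<in># Gs j"
    using next_occL[OF _ uL(3)] by blast
  have e: "run L s0 (Suc j) = pick L (Gs j - {#Lab x (Imp A B)#}, add_mset (Lab x A) (Ds j))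
                 (add_mset (Lab x B) (Gs j - {#Lab x (Imp A B)#}), Ds j)"
    using at_task[OF j(1)] j(2) by (simp only: SS)
  have "(\<lambda>S. Lab x A \<in># snd S) (pick L (Gs j - {#Lab x (Imp A B)#}, add_mset (Lab x A) (Ds j))
                 (add_mset (Lab x B) (Gs j - {#Lab x (Imp A B)#}), Ds j)) \<or> (\<lambda>S. Lab x B \<in># fst S) (pick L (Gs j - {#Lab x (Imp A B)#}, add_mset (Lab x A) (Ds j))
                 (add_mset (Lab x B) (Gs j - {#Lab x (Imp A B)#}), Ds j))"
    by (rule pick_or[where Q="(\<lambda>S. Lab x A \<in># snd S)" and R="(\<lambda>S. Lab x B \<in># fst S)"]) simp_all
  hence "Lab x A \<in># Ds (Suc j) \<or> Lab x B \<in># Gs (Suc j)" by (simp only: e)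
  thus ?thesis using inGI inDI by blast
qed

lemma satRAnd: assumes "Lab x (And A B) \<in> DI" shows "Lab x A \<in> DI \<or> Lab x B \<in> DI"
proof -
  obtain k where "Lab x (And A B) \<in># Ds k" using obtDI[OF assms] by blast
  then obtain j where j: "taskOf j = TRAnd x A B" "Lab x (And A B) \<in># Ds j"
    using next_occR[OF _ uR(1)] by blast
  have e: "run L s0 (Suc j) = pick L (Gs j, add_mset (Lab x A) (Ds j - {#Lab x (And A B)#}))
                 (Gs j, add_mset (Lab x B) (Ds j - {#Lab x (And A B)#}))"
    using at_task[OF j(1)] j(2) by (simp only: SS)
  have "(\<lambda>S. Lab x A \<in># snd S) (pick L (Gs j, add_mset (Lab x A) (Ds j - {#Lab x (And A B)#}))
                 (Gs j, add_mset (Lab x B) (Ds j - {#Lab x (And A B)#}))) \<or> (\<lambda>S. Lab x B \<in># snd S) (pick L (Gs j, add_mset (Lab x A) (Ds j - {#Lab x (And A B)#}))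
                 (Gs j, add_mset (Lab x B) (Ds j - {#Lab x (And A B)#})))"
    by (rule pick_or[where Q="(\<lambda>S. Lab x A \<in># snd S)" and R="(\<lambda>S. Lab x B \<in># snd S)"]) simp_all
  hence "Lab x A \<in># Ds (Suc j) \<or> Lab x B \<in># Ds (Suc j)" by (simp only: e)
  thus ?thesis using inDI by blast
qed

lemma satROr: assumes "Lab x (Or A B) \<in> DI" shows "Lab x A \<in> DI \<and> Lab x B \<in> DI"
proof -
  obtain k where "Lab x (Or A B) \<in># Ds k" using obtDI[OF assms] by blast
  then obtain j where j: "taskOf j = TROr x A B" "Lab x (Or A B) \<in># Ds j"
    using next_occR[OF _ uR(2)] by blast
  have "Ds (Suc j) = add_mset (Lab x A) (add_mset (Lab x B) (Ds j - {#Lab x (Or A B)#}))"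
    using at_task[OF j(1)] j(2) by (simp only: SS)
  hence "Lab x A \<in># Ds (Suc j)" "Lab x B \<in># Ds (Suc j)" by simp_all
  thus ?thesis using inDI by blast
qed

lemma satRImp: assumes "Lab x (Imp A B) \<in> DI" shows "Lab x A \<in> GI \<and> Lab x B \<in> DI"
proof -
  obtain k where "Lab x (Imp A B) \<in># Ds k" using obtDI[OF assms] by blast
  then obtain j where j: "taskOf j = TRImp x A B" "Lab x (Imp A B) \<in># Ds j"
    using next_occR[OF _ uR(3)] by blast
  have "run L s0 (Suc j) = (add_mset (Lab x A) (Gs j), add_mset (Lab x B) (Ds j - {#Lab x (Imp A B)#}))"
    using at_task[OF j(1)] j(2) by (simp only: SS)
  hence "Lab x A \<in># Gs (Suc j)" "Lab x B \<in># Ds (Suc j)" by simp_all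
  thus ?thesis using inGI inDI by blast
qed

lemma satRAll: assumes "FAll a A \<in> DI" shows "\<exists>y. Mem y a \<in> GI \<and> Lab y A \<in> DI"
proof -
  obtain k where "FAll a A \<in># Ds k" using obtDI[OF assms] by blast
  then obtain j where j: "taskOf j = TRAll a A" "FAll a A \<in># Ds j"
    using next_occR[OF _ uR(4)] by blast
  have "run L s0 (Suc j) = (add_mset (Mem (fw (Gs j) (Ds j)) a) (Gs j),
       add_mset (Lab (fw (Gs j) (Ds j)) A) (Ds j - {#FAll a A#}))"
    using at_task[OF j(1)] j(2) by (simp only: SS)
  hence "Mem (fw (Gs j) (Ds j)) a \<in># Gs (Suc j)" "Lab (fw (Gs j) (Ds j)) A \<in># Ds (Suc j)" by simp_all
  thus ?thesis using inGI inDI by blast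
qed

lemma satLEx: assumes "FEx a A \<in> GI" shows "\<exists>y. Mem y a \<in> GI \<and> Lab y A \<in> GI"
proof -
  obtain k where "FEx a A \<in># Gs k" using obtGI[OF assms] by blast
  then obtain j where j: "taskOf j = TLEx a A" "FEx a A \<in># Gs j"
    using next_occL[OF _ uL(4)] by blast
  have "Gs (Suc j) = add_mset (Mem (fw (Gs j) (Ds j)) a) (add_mset (Lab (fw (Gs j) (Ds j)) A) (Gs j - {#FEx a A#}))"
    using at_task[OF j(1)] j(2) by (simp only: SS)
  hence "Mem (fw (Gs j) (Ds j)) a \<in># Gs (Suc j)" "Lab (fw (Gs j) (Ds j)) A \<in># Gs (Suc j)" by simp_all
  thus ?thesis using inGI by blast
qed

lemma satRCond: assumes "Lab x (Cond A B) \<in> DI"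
  shows "\<exists>n. InN (NV n) x \<in> GI \<and> FEx (NV n) A \<in> GI \<and> CondL x (NV n) A B \<in> DI"
proof -
  obtain k where "Lab x (Cond A B) \<in># Ds k" using obtDI[OF assms] by blast
  then obtain j where j: "taskOf j = TRCond x A B" "Lab x (Cond A B) \<in># Ds j"
    using next_occR[OF _ uR(5)] by blast
  let ?n = "fn (Gs j) (Ds j)"
  have "run L s0 (Suc j) = (add_mset (InN (NV ?n) x) (add_mset (FEx (NV ?n) A) (Gs j)),
           add_mset (CondL x (NV ?n) A B) (Ds j - {#Lab x (Cond A B)#}))"
    using at_task[OF j(1)] j(2) by (simp only: SS)
  hence "InN (NV ?n) x \<in># Gs (Suc j)" "FEx (NV ?n) A \<in># Gs (Suc j)" "CondL x (NV ?n) A B \<in># Ds (Suc j)"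
    by simp_all
  thus ?thesis using inGI inDI by blast
qed

lemma satLBar: assumes "CondL x a A B \<in> GI"
  shows "\<exists>n. InN (NV n) x \<in> GI \<and> Sub (NV n) a \<in> GI \<and> FEx (NV n) A \<in> GI \<and> FAll (NV n) (Imp A B) \<in> GI"
proof -
  obtain k where "CondL x a A B \<in># Gs k" using obtGI[OF assms] by blast
  then obtain j where j: "taskOf j = TLBar x a A B" "CondL x a A B \<in># Gs j"
    using next_occL[OF _ uL(5)] by blast
  let ?n = "fn (Gs j) (Ds j)"
  have "Gs (Suc j) = add_mset (InN (NV ?n) x) (add_mset (Sub (NV ?n) a)
            (add_mset (FEx (NV ?n) A) (add_mset (FAll (NV ?n) (Imp A B))
             (Gs j - {#CondL x a A B#}))))"
    using at_task[OF j(1)] j(2) by (simp only: SS)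
  hence "InN (NV ?n) x \<in># Gs (Suc j)" "Sub (NV ?n) a \<in># Gs (Suc j)" "FEx (NV ?n) A \<in># Gs (Suc j)"
     "FAll (NV ?n) (Imp A B) \<in># Gs (Suc j)"
    by simp_all
  thus ?thesis using inGI by blast
qed

lemma satLAll: assumes "Mem x a \<in> GI" "FAll a A \<in> GI" shows "Lab x A \<in> GI"
proof -
  obtain j where j: "taskOf j = TLAll x a A" "Mem x a \<in># Gs j" "FAll a A \<in># Gs j"
    using fairL[of "[Mem x a, FAll a A]" "TLAll x a A"] assms persL_simps by auto
  have "Gs (Suc j) = add_mset (Lab x A) (Gs j)"
    using at_task[OF j(1)] j(2,3) by (simp only: SS)
  thus ?thesis using inGI[of _ "Suc j"] by simp
qed

lemma satREx: assumes "Mem x a \<in> GI" "FEx a A \<in> DI" shows "Lab x A \<in> DI"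
proof -
  obtain j where j: "taskOf j = TREx x a A" "Mem x a \<in># Gs j" "FEx a A \<in># Ds j"
    using fairLR[of "[Mem x a]" "[FEx a A]" "TREx x a A"] assms persL_simps persR_simps by auto
  have "Ds (Suc j) = add_mset (Lab x A) (Ds j)"
    using at_task[OF j(1)] j(2,3) by (simp only: SS)
  thus ?thesis using inDI[of _ "Suc j"] by simp
qed

lemma satLCond: assumes "InN a x \<in> GI" "Lab x (Cond A B) \<in> GI" shows "FEx a A \<in> DI \<or> CondL x a A B \<in> GI"
proof -
  obtain j where j: "taskOf j = TLCond x a A B" "InN a x \<in># Gs j" "Lab x (Cond A B) \<in># Gs j"
    using fairL[of "[InN a x, Lab x (Cond A B)]" "TLCond x a A B"] assms persL_simps by auto
  have e: "run L s0 (Suc j) = pick L (Gs j, add_mset (FEx a A) (Ds j)) (add_mset (CondL x a A B) (Gs j), Ds j)"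
    using at_task[OF j(1)] j(2,3) by (simp only: SS)
  have "(\<lambda>S. FEx a A \<in># snd S) (pick L (Gs j, add_mset (FEx a A) (Ds j)) (add_mset (CondL x a A B) (Gs j), Ds j)) \<or> (\<lambda>S. CondL x a A B \<in># fst S) (pick L (Gs j, add_mset (FEx a A) (Ds j)) (add_mset (CondL x a A B) (Gs j), Ds j))"
    by (rule pick_or[where Q="(\<lambda>S. FEx a A \<in># snd S)" and R="(\<lambda>S. CondL x a A B \<in># fst S)"]) simp_all
  hence "FEx a A \<in># Ds (Suc j) \<or> CondL x a A B \<in># Gs (Suc j)" by (simp only: e)
  thus ?thesis using inGI inDI by blast
qed

lemma satRBar: assumes "InN c x \<in> GI" "Sub c a \<in> GI" "CondL x a A B \<in> DI"
  shows "FEx c A \<in> DI \<or> FAll c (Imp A B) \<in> DI"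
proof -
  obtain j where j: "taskOf j = TRBar x a c A B" "InN c x \<in># Gs j" "Sub c a \<in># Gs j"
     "CondL x a A B \<in># Ds j"
    using fairLR[of "[InN c x, Sub c a]" "[CondL x a A B]" "TRBar x a c A B"] assms persL_simps persR_simps by auto
  have e: "run L s0 (Suc j) = pick L (Gs j, add_mset (FEx c A) (Ds j)) (Gs j, add_mset (FAll c (Imp A B)) (Ds j))"
    using at_task[OF j(1)] j(2,3,4) by (simp only: SS)
  have "(\<lambda>S. FEx c A \<in># snd S) (pick L (Gs j, add_mset (FEx c A) (Ds j)) (Gs j, add_mset (FAll c (Imp A B)) (Ds j))) \<or> (\<lambda>S. FAll c (Imp A B) \<in># snd S) (pick L (Gs j, add_mset (FEx c A) (Ds j)) (Gs j, add_mset (FAll c (Imp A B)) (Ds j)))"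
    by (rule pick_or[where Q="(\<lambda>S. FEx c A \<in># snd S)" and R="(\<lambda>S. FAll c (Imp A B) \<in># snd S)"]) simp_all
  hence "FEx c A \<in># Ds (Suc j) \<or> FAll c (Imp A B) \<in># Ds (Suc j)" by (simp only: e)
  thus ?thesis using inDI by blast
qed

end



context canon
begin

lemma noAtom: assumes "Lab x (Atom p) \<in> GI" "Lab x (Atom p) \<in> DI" shows False
proof -
  obtain j where j: "Lab x (Atom p) \<in># Gs j" "Lab x (Atom p) \<in># Ds j"
    using fairLR[of "[Lab x (Atom p)]" "[Lab x (Atom p)]" "TRef (NV 0)"] assms persL_simps persR_simps by auto
  obtain G0 where g: "Gs j = add_mset (Lab x (Atom p)) G0" using j(1) by (meson ex_rest)
  obtain D0 where d: "Ds j = add_mset (Lab x (Atom p)) D0" using j(2) by (meson ex_rest)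
  have "deriv L (add_mset (Lab x (Atom p)) G0) (add_mset (Lab x (Atom p)) D0)" by (rule deriv.Init)
  thus False using nd_k[of j] unfolding g d by simp
qed

lemma noBot: assumes "Lab x Bot \<in> GI" shows False
proof -
  obtain k where "Lab x Bot \<in># Gs k" using obtGI[OF assms] by blast
  then obtain G0 where g: "Gs k = add_mset (Lab x Bot) G0" by (meson ex_rest)
  have "deriv L (add_mset (Lab x Bot) G0) (Ds k)" by (rule deriv.LBot)
  thus False using nd_k[of k] unfolding g by simp
qed

lemma satRef: "Sub a a \<in> GI"
proof -
  obtain j where j: "taskOf j = TRef a" using fair by blast
  have "Gs (Suc j) = add_mset (Sub a a) (Gs j)" using at_task[OF j] by (simp only: SS)
  thus ?thesis using inGI[of _ "Suc j"] by simp
qed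

lemma satTr: assumes "Sub c b \<in> GI" "Sub b a \<in> GI" shows "Sub c a \<in> GI"
proof (cases "Sub c b = Sub b a")
  case True thus ?thesis using assms by simp
next
  case False
  obtain j where j: "taskOf j = TTr c b a" "Sub c b \<in># Gs j" "Sub b a \<in># Gs j"
    using fairL[of "[Sub c b, Sub b a]" "TTr c b a"] assms persL_simps by auto
  have s: "{#Sub c b, Sub b a#} \<subseteq># Gs j" by (rule sub2[OF j(2) j(3) False])
  have "Gs (Suc j) = add_mset (Sub c a) (Gs j)" using at_task[OF j(1)] s by (simp only: SS)
  thus ?thesis using inGI[of _ "Suc j"] by simp
qed

lemma satLSub: assumes "Mem x a \<in> GI" "Sub a b \<in> GI" shows "Mem x b \<in> GI"
proof -
  obtain j where j: "taskOf j = TLSub x a b" "Mem x a \<in># Gs j" "Sub a b \<in># Gs j"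
    using fairL[of "[Mem x a, Sub a b]" "TLSub x a b"] assms persL_simps by auto
  have "Gs (Suc j) = add_mset (Mem x b) (Gs j)" using at_task[OF j(1)] j(2,3) by (simp only: SS)
  thus ?thesis using inGI[of _ "Suc j"] by simp
qed

lemma satN: assumes "hasN L" shows "\<exists>n. InN (NV n) x \<in> GI"
proof -
  obtain j where j: "taskOf j = TN x" using fair by blast
  have "Gs (Suc j) = add_mset (InN (NV (fn (Gs j) (Ds j))) x) (Gs j)" using at_task[OF j] assms by (simp only: SS)
  thus ?thesis using inGI[of _ "Suc j"] by auto
qed

lemma sat0: assumes "hasN L" "InN a x \<in> GI" shows "\<exists>y. Mem y a \<in> GI"
proof -
  obtain j where j: "taskOf j = T0 a x" "InN a x \<in># Gs j"
    using fairL[of "[InN a x]" "T0 a x"] assms persL_simps by auto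
  have "Gs (Suc j) = add_mset (Mem (fw (Gs j) (Ds j)) a) (Gs j)" using at_task[OF j(1)] j(2) assms(1) by (simp only: SS)
  thus ?thesis using inGI[of _ "Suc j"] by auto
qed

lemma satT: assumes "hasT L" shows "\<exists>n. Mem x (NV n) \<in> GI \<and> InN (NV n) x \<in> GI"
proof -
  obtain j where j: "taskOf j = TT x" using fair by blast
  have "Gs (Suc j) = add_mset (Mem x (NV (fn (Gs j) (Ds j)))) (add_mset (InN (NV (fn (Gs j) (Ds j))) x) (Gs j))"
    using at_task[OF j] assms by (simp only: SS)
  thus ?thesis using inGI[of _ "Suc j"] by auto
qed

lemma satW: assumes "hasW L" "InN a x \<in> GI" shows "Mem x a \<in> GI"
proof -
  obtain j where j: "taskOf j = TW a x" "InN a x \<in># Gs j"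
    using fairL[of "[InN a x]" "TW a x"] assms persL_simps by auto
  have "Gs (Suc j) = add_mset (Mem x a) (Gs j)" using at_task[OF j(1)] j(2) assms(1) by (simp only: SS)
  thus ?thesis using inGI[of _ "Suc j"] by auto
qed

lemma satSingle: assumes "hasC L" "InN (Sg x) x \<in> GI" shows "Mem x (Sg x) \<in> GI"
proof -
  obtain j where j: "taskOf j = TSingle x" "InN (Sg x) x \<in># Gs j"
    using fairL[of "[InN (Sg x) x]" "TSingle x"] assms persL_simps by auto
  have "Gs (Suc j) = add_mset (Mem x (Sg x)) (Gs j)" using at_task[OF j(1)] j(2) assms(1) by (simp only: SS)
  thus ?thesis using inGI[of _ "Suc j"] by auto
qed

lemma satC: assumes "hasC L" "InN a x \<in> GI" shows "InN (Sg x) x \<in> GI \<and> Sub (Sg x) a \<in> GI"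
proof -
  obtain j where j: "taskOf j = TC a x" "InN a x \<in># Gs j"
    using fairL[of "[InN a x]" "TC a x"] assms persL_simps by auto
  have "Gs (Suc j) = add_mset (InN (Sg x) x) (add_mset (Sub (Sg x) a) (Gs j))"
    using at_task[OF j(1)] j(2) assms(1) by (simp only: SS)
  thus ?thesis using inGI[of _ "Suc j"] by auto
qed

lemma satRepl1: assumes "hasC L" "Mem y (Sg x) \<in> GI" "At k x \<in> GI" "At k x \<noteq> Mem y (Sg x)"
  shows "At k y \<in> GI"
proof -
  obtain j where j: "taskOf j = TRepl1 y x k" "Mem y (Sg x) \<in># Gs j" "At k x \<in># Gs j"
    using fairL[of "[Mem y (Sg x), At k x]" "TRepl1 y x k"] assms persL_simps persL_At by auto
  have s: "{#Mem y (Sg x), At k x#} \<subseteq># Gs j" by (rule sub2[OF j(2) j(3) not_sym[OF assms(4)]])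
  have "Gs (Suc j) = add_mset (At k y) (Gs j)" using at_task[OF j(1)] s assms(1) by (simp only: SS)
  thus ?thesis using inGI[of _ "Suc j"] by simp
qed

lemma satRepl2: assumes "hasC L" "Mem y (Sg x) \<in> GI" "At k y \<in> GI" "At k y \<noteq> Mem y (Sg x)"
  shows "At k x \<in> GI"
proof -
  obtain j where j: "taskOf j = TRepl2 y x k" "Mem y (Sg x) \<in># Gs j" "At k y \<in># Gs j"
    using fairL[of "[Mem y (Sg x), At k y]" "TRepl2 y x k"] assms persL_simps persL_At by auto
  have s: "{#Mem y (Sg x), At k y#} \<subseteq># Gs j" by (rule sub2[OF j(2) j(3) not_sym[OF assms(4)]])
  have "Gs (Suc j) = add_mset (At k x) (Gs j)" using at_task[OF j(1)] s assms(1) by (simp only: SS)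
  thus ?thesis using inGI[of _ "Suc j"] by simp
qed

lemma satU1: assumes "hasU L" "InN a x \<in> GI" "Mem y a \<in> GI" "InN b y \<in> GI" "Mem z b \<in> GI"
  shows "\<exists>n. Mem z (NV n) \<in> GI \<and> InN (NV n) x \<in> GI"
proof -
  obtain j where j: "taskOf j = TU1 a x y b z" "InN a x \<in># Gs j" "Mem y a \<in># Gs j" "InN b y \<in># Gs j" "Mem z b \<in># Gs j"
    using fairL[of "[InN a x, Mem y a, InN b y, Mem z b]" "TU1 a x y b z"] assms persL_simps by auto
  have s: "{InN a x, Mem y a, InN b y, Mem z b} \<subseteq> set_mset (Gs j)" using j by simp
  have "Gs (Suc j) = add_mset (Mem z (NV (fn (Gs j) (Ds j)))) (add_mset (InN (NV (fn (Gs j) (Ds j))) x) (Gs j))"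
    using at_task[OF j(1)] s assms(1) by (simp only: SS)
  thus ?thesis using inGI[of _ "Suc j"] by auto
qed

lemma satU2: assumes "hasU L" "InN a x \<in> GI" "Mem y a \<in> GI" "InN b x \<in> GI" "Mem z b \<in> GI"
  shows "\<exists>n. Mem z (NV n) \<in> GI \<and> InN (NV n) y \<in> GI"
proof -
  obtain j where j: "taskOf j = TU2 a x y b z" "InN a x \<in># Gs j" "Mem y a \<in># Gs j" "InN b x \<in># Gs j" "Mem z b \<in># Gs j"
    using fairL[of "[InN a x, Mem y a, InN b x, Mem z b]" "TU2 a x y b z"] assms persL_simps by auto
  have s: "{InN a x, Mem y a, InN b x, Mem z b} \<subseteq> set_mset (Gs j)" using j by simp
  have "Gs (Suc j) = add_mset (Mem z (NV (fn (Gs j) (Ds j)))) (add_mset (InN (NV (fn (Gs j) (Ds j))) y) (Gs j))"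
    using at_task[OF j(1)] s assms(1) by (simp only: SS)
  thus ?thesis using inGI[of _ "Suc j"] by auto
qed

lemma satA1: assumes "hasA L" "InN a x \<in> GI" "Mem y a \<in> GI" "InN b x \<in> GI"
  shows "InN b y \<in> GI"
proof -
  obtain j where j: "taskOf j = TA1 a x y b" "InN a x \<in># Gs j" "Mem y a \<in># Gs j" "InN b x \<in># Gs j"
    using fairL[of "[InN a x, Mem y a, InN b x]" "TA1 a x y b"] assms persL_simps by auto
  have s: "{InN a x, Mem y a, InN b x} \<subseteq> set_mset (Gs j)" using j by simp
  have "Gs (Suc j) = add_mset (InN b y) (Gs j)"
    using at_task[OF j(1)] s assms(1) by (simp only: SS)
  thus ?thesis using inGI[of _ "Suc j"] by auto
qed

lemma satA2: assumes "hasA L" "InN a x \<in> GI" "Mem y a \<in> GI" "InN b y \<in> GI"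
  shows "InN b x \<in> GI"
proof (cases "InN a x = InN b y")
  case True thus ?thesis using assms by simp
next
  case False
  obtain j where j: "taskOf j = TA2 a x y b" "InN a x \<in># Gs j" "Mem y a \<in># Gs j" "InN b y \<in># Gs j"
    using fairL[of "[InN a x, Mem y a, InN b y]" "TA2 a x y b"] assms persL_simps by auto
  have s: "{#InN a x, Mem y a, InN b y#} \<subseteq># Gs j" using sub3[OF j(2,3,4)] False by simp
  have "Gs (Suc j) = add_mset (InN b x) (Gs j)"
    using at_task[OF j(1)] s assms(1) by (simp only: SS)
  thus ?thesis using inGI[of _ "Suc j"] by auto
qed

end



fun sat :: "(nat \<Rightarrow> nat \<Rightarrow> bool) \<Rightarrow> (nat \<Rightarrow> nlabel set) \<Rightarrow> (nlabel \<Rightarrow> nat set) \<Rightarrow>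
   (nlabel \<Rightarrow> nlabel \<Rightarrow> bool) \<Rightarrow> nat \<Rightarrow> form \<Rightarrow> bool" where
  "sat V N E R w (Atom p) = V w p"
| "sat V N E R w Bot = False"
| "sat V N E R w (And A B) = (sat V N E R w A \<and> sat V N E R w B)"
| "sat V N E R w (Or A B) = (sat V N E R w A \<or> sat V N E R w B)"
| "sat V N E R w (Imp A B) = (sat V N E R w A \<longrightarrow> sat V N E R w B)"
| "sat V N E R w (Cond A B) = (\<forall>a\<in>N w. (\<exists>y\<in>E a. sat V N E R y A) \<longrightarrow>
      (\<exists>c\<in>N w. R c a \<and> (\<exists>y\<in>E c. sat V N E R y A) \<and> (\<forall>y\<in>E c. sat V N E R y A \<longrightarrow> sat V N E R y B)))"

lemma peval_sat: "peval (sat V N E R w) A = sat V N E R w A"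
  by (induction A) simp_all

lemma sat_CondBot: "sat V N E R w (Cond X Bot) = (\<forall>a\<in>N w. \<not> (\<exists>y\<in>E a. sat V N E R y X))"
  by auto

lemma sat_Neg: "sat V N E R y (Neg X) = (\<not> sat V N E R y X)"
  by (simp add: Neg_def)

lemma sat_congN: "N y = N w \<Longrightarrow> sat V N E R y (Cond A B) = sat V N E R w (Cond A B)"
  by simp

lemma sat_cong: "V y = V w \<Longrightarrow> N y = N w \<Longrightarrow> sat V N E R y F = sat V N E R w F"
  by (induction F) simp_all

lemma has_imp: "hasW L \<Longrightarrow> hasT L" "hasT L \<Longrightarrow> hasN L" "hasC L \<Longrightarrow> hasW L"
  unfolding hasW_def hasT_def hasN_def hasC_def by auto

locale model =
  fixes L :: logic and V :: "nat \<Rightarrow> nat \<Rightarrow> bool" and N :: "nat \<Rightarrow> nlabel set"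
    and E :: "nlabel \<Rightarrow> nat set" and R :: "nlabel \<Rightarrow> nlabel \<Rightarrow> bool"
  assumes rrefl: "R a a"
    and rtrans: "R c b \<Longrightarrow> R b a \<Longrightarrow> R c a"
    and rmono: "R c a \<Longrightarrow> y \<in> E c \<Longrightarrow> y \<in> E a"
    and fN: "hasN L \<Longrightarrow> \<exists>a\<in>N x. \<exists>y. y \<in> E a"
    and fT: "hasT L \<Longrightarrow> \<exists>a\<in>N x. x \<in> E a"
    and fW: "hasW L \<Longrightarrow> a \<in> N x \<Longrightarrow> x \<in> E a"
    and fC: "hasC L \<Longrightarrow> \<exists>s\<in>N x. (\<forall>a\<in>N x. R s a) \<and> x \<in> E s \<and> (\<forall>y\<in>E s. V y = V x \<and> N y = N x)"
    and fU1: "hasU L \<Longrightarrow> a \<in> N x \<Longrightarrow> y \<in> E a \<Longrightarrow> b \<in> N y \<Longrightarrow> z \<in> E b \<Longrightarrow> \<exists>c\<in>N x. z \<in> E c"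
    and fU2: "hasU L \<Longrightarrow> a \<in> N x \<Longrightarrow> y \<in> E a \<Longrightarrow> b \<in> N x \<Longrightarrow> z \<in> E b \<Longrightarrow> \<exists>c\<in>N y. z \<in> E c"
    and fA: "hasA L \<Longrightarrow> a \<in> N x \<Longrightarrow> y \<in> E a \<Longrightarrow> N y = N x"
begin

abbreviation S where "S \<equiv> sat V N E R"

lemma cond_triv: "(\<And>a y. a \<in> N w \<Longrightarrow> y \<in> E a \<Longrightarrow> S y X) \<Longrightarrow> S w (Cond C X)"
proof (simp only: sat.simps(6), intro ballI impI)
  fix a assume h: "\<And>a y. a \<in> N w \<Longrightarrow> y \<in> E a \<Longrightarrow> S y X" and a: "a \<in> N w" "\<exists>y\<in>E a. S y C"
  show "\<exists>c\<in>N w. R c a \<and> (\<exists>y\<in>E c. S y C) \<and> (\<forall>y\<in>E c. S y C \<longrightarrow> S y X)"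
    using a h[OF a(1)] rrefl[of a] by blast
qed

lemma sound0: "hderiv L' A \<Longrightarrow> L' = L \<Longrightarrow> S w A"
proof (induction arbitrary: w rule: hderiv.induct)
  case (Taut A _) thus ?case using peval_sat unfolding taut_def by metis
next
  case (MP L' A B) thus ?case by simp
next
  case (RCEA L' A B C)
  have eq: "\<And>y. S y A = S y B" using RCEA.IH RCEA.prems unfolding Iff_def by auto
  show ?case unfolding Iff_def by (simp add: eq)
next
  case (RCK L' A B C)
  have i: "\<And>y. S y A \<Longrightarrow> S y B" using RCK.IH RCK.prems by simp
  show ?case
  proof (simp only: sat.simps, intro impI ballI)
    fix a assume h: "\<forall>a\<in>N w. (\<exists>y\<in>E a. S y C) \<longrightarrow> (\<exists>c\<in>N w. R c a \<and> (\<exists>y\<in>E c. S y C) \<and> (\<forall>y\<in>E c. S y C \<longrightarrow> S y A))"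
      "a \<in> N w" "\<exists>y\<in>E a. S y C"
    then obtain c where "c \<in> N w" "R c a" "\<exists>y\<in>E c. S y C" "\<forall>y\<in>E c. S y C \<longrightarrow> S y A" by blast
    thus "\<exists>c\<in>N w. R c a \<and> (\<exists>y\<in>E c. S y C) \<and> (\<forall>y\<in>E c. S y C \<longrightarrow> S y B)" using i by blast
  qed
next
  case (ID L' A) thus ?case using rrefl by auto
next
  case (RAnd L' A B C)
  show ?case
  proof (simp only: sat.simps, intro impI ballI)
    fix a assume h: "(\<forall>a\<in>N w. (\<exists>y\<in>E a. S y A) \<longrightarrow> (\<exists>c\<in>N w. R c a \<and> (\<exists>y\<in>E c. S y A) \<and> (\<forall>y\<in>E c. S y A \<longrightarrow> S y B))) \<and>
      (\<forall>a\<in>N w. (\<exists>y\<in>E a. S y A) \<longrightarrow> (\<exists>c\<in>N w. R c a \<and> (\<exists>y\<in>E c. S y A) \<and> (\<forall>y\<in>E c. S y A \<longrightarrow> S y C)))"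
      "a \<in> N w" "\<exists>y\<in>E a. S y A"
    then obtain c where c: "c \<in> N w" "R c a" "\<exists>y\<in>E c. S y A" "\<forall>y\<in>E c. S y A \<longrightarrow> S y B" by blast
    then obtain d where d: "d \<in> N w" "R d c" "\<exists>y\<in>E d. S y A" "\<forall>y\<in>E d. S y A \<longrightarrow> S y C" using h(1) by blast
    have "R d a" using rtrans d(2) c(2) .
    moreover have "\<forall>y\<in>E d. S y A \<longrightarrow> S y B \<and> S y C" using d(2,4) c(4) rmono by blast
    ultimately show "\<exists>c\<in>N w. R c a \<and> (\<exists>y\<in>E c. S y A) \<and> (\<forall>y\<in>E c. S y A \<longrightarrow> S y B \<and> S y C)"
      using d by blast
  qed
next
  case (CM L' A B C)
  show ?case
  proof (simp only: sat.simps, intro impI ballI)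
    fix a assume h: "(\<forall>a\<in>N w. (\<exists>y\<in>E a. S y A) \<longrightarrow> (\<exists>c\<in>N w. R c a \<and> (\<exists>y\<in>E c. S y A) \<and> (\<forall>y\<in>E c. S y A \<longrightarrow> S y B))) \<and>
      (\<forall>a\<in>N w. (\<exists>y\<in>E a. S y A) \<longrightarrow> (\<exists>c\<in>N w. R c a \<and> (\<exists>y\<in>E c. S y A) \<and> (\<forall>y\<in>E c. S y A \<longrightarrow> S y C)))"
      "a \<in> N w" "\<exists>y\<in>E a. S y A \<and> S y B"
    then obtain c where c: "c \<in> N w" "R c a" "\<exists>y\<in>E c. S y A" "\<forall>y\<in>E c. S y A \<longrightarrow> S y B" by blast
    then obtain d where d: "d \<in> N w" "R d c" "\<exists>y\<in>E d. S y A" "\<forall>y\<in>E d. S y A \<longrightarrow> S y C" using h(1) by blast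
    have "R d a" using rtrans d(2) c(2) .
    moreover have "\<forall>y\<in>E d. S y A \<longrightarrow> S y B" using d(2) c(4) rmono by blast
    ultimately show "\<exists>c\<in>N w. R c a \<and> (\<exists>y\<in>E c. S y A \<and> S y B) \<and> (\<forall>y\<in>E c. S y A \<and> S y B \<longrightarrow> S y C)"
      using d by blast
  qed
next
  case (OR L' A C B)
  show ?case
  proof (simp only: sat.simps, intro impI ballI)
    fix a assume h: "(\<forall>a\<in>N w. (\<exists>y\<in>E a. S y A) \<longrightarrow> (\<exists>c\<in>N w. R c a \<and> (\<exists>y\<in>E c. S y A) \<and> (\<forall>y\<in>E c. S y A \<longrightarrow> S y C))) \<and>
      (\<forall>a\<in>N w. (\<exists>y\<in>E a. S y B) \<longrightarrow> (\<exists>c\<in>N w. R c a \<and> (\<exists>y\<in>E c. S y B) \<and> (\<forall>y\<in>E c. S y B \<longrightarrow> S y C)))"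
      "a \<in> N w" "\<exists>y\<in>E a. S y A \<or> S y B"
    have hA: "\<And>a. a \<in> N w \<Longrightarrow> \<exists>y\<in>E a. S y A \<Longrightarrow> \<exists>c\<in>N w. R c a \<and> (\<exists>y\<in>E c. S y A) \<and> (\<forall>y\<in>E c. S y A \<longrightarrow> S y C)"
      using h(1) by blast
    have hB: "\<And>a. a \<in> N w \<Longrightarrow> \<exists>y\<in>E a. S y B \<Longrightarrow> \<exists>c\<in>N w. R c a \<and> (\<exists>y\<in>E c. S y B) \<and> (\<forall>y\<in>E c. S y B \<longrightarrow> S y C)"
      using h(1) by blast
    show "\<exists>c\<in>N w. R c a \<and> (\<exists>y\<in>E c. S y A \<or> S y B) \<and> (\<forall>y\<in>E c. S y A \<or> S y B \<longrightarrow> S y C)"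
    proof (cases "\<exists>y\<in>E a. S y A")
      case True
      then obtain c where c: "c \<in> N w" "R c a" "\<exists>y\<in>E c. S y A" "\<forall>y\<in>E c. S y A \<longrightarrow> S y C" using hA h(2) by blast
      show ?thesis
      proof (cases "\<exists>y\<in>E c. S y B")
        case True
        then obtain d where d: "d \<in> N w" "R d c" "\<exists>y\<in>E d. S y B" "\<forall>y\<in>E d. S y B \<longrightarrow> S y C" using hB c(1) by blast
        have "R d a" using rtrans d(2) c(2) .
        moreover have "\<forall>y\<in>E d. S y A \<longrightarrow> S y C" using d(2) c(4) rmono by blast
        ultimately show ?thesis using d by blast
      next
        case False thus ?thesis using c by blast
      qed
    next
      case False
      hence "\<exists>y\<in>E a. S y B" using h(3) by blast
      then obtain c where c: "c \<in> N w" "R c a" "\<exists>y\<in>E c. S y B" "\<forall>y\<in>E c. S y B \<longrightarrow> S y C" using hB h(2) by blast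
      have "\<forall>y\<in>E c. \<not> S y A" using False c(2) rmono by blast
      thus ?thesis using c by blast
    qed
  qed
next
  case (AxN L')
  obtain a y where "a \<in> N w" "y \<in> E a" using fN[OF AxN(1)[unfolded AxN(2)]] by blast
  thus ?case unfolding Neg_def Top_def by auto
next
  case (AxT L' A)
  obtain a where a: "a \<in> N w" "w \<in> E a" using fT[OF AxT(1)[unfolded AxT(2)]] by blast
  show ?case unfolding Neg_def using a by (auto simp del: sat.simps(6) simp: sat_CondBot)
next
  case (AxW L' A B)
  obtain a where a: "a \<in> N w" "w \<in> E a" using fT[OF has_imp(1)[OF AxW(1)[unfolded AxW(2)]]] by blast
  show ?case
  proof (simp only: sat.simps, intro impI)
    assume h: "\<forall>a\<in>N w. (\<exists>y\<in>E a. S y A) \<longrightarrow> (\<exists>c\<in>N w. R c a \<and> (\<exists>y\<in>E c. S y A) \<and> (\<forall>y\<in>E c. S y A \<longrightarrow> S y B))"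
      "S w A"
    then obtain c where "c \<in> N w" "\<forall>y\<in>E c. S y A \<longrightarrow> S y B" using a by blast
    moreover have "w \<in> E c" using fW[OF AxW(1)[unfolded AxW(2)]] calculation(1) .
    ultimately show "S w B" using h(2) by blast
  qed
next
  case (AxC L' A B)
  have hC: "hasC L" using AxC by simp
  obtain s where s: "s \<in> N w" "\<forall>a\<in>N w. R s a" "w \<in> E s" "\<forall>y\<in>E s. V y = V w \<and> N y = N w"
    using fC[OF hC] by blast
  have eq: "S y F = S w F" if "y \<in> E s" for y F
  proof -
    have "V y = V w" "N y = N w" using s(4) that by auto
    thus ?thesis by (rule sat_cong)
  qed
  show ?case
  proof (simp only: sat.simps(3,5,6), intro impI ballI)
    fix a assume h: "S w A \<and> S w B" and a: "a \<in> N w" "\<exists>y\<in>E a. S y A"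
    have "R s a" using s(2) a(1) by blast
    moreover have "\<exists>y\<in>E s. S y A" using s(3) h by blast
    moreover have "\<forall>y\<in>E s. S y A \<longrightarrow> S y B"
    proof
      fix y assume "y \<in> E s" hence "S y B = S w B" by (rule eq)
      thus "S y A \<longrightarrow> S y B" using h by simp
    qed
    ultimately show "\<exists>c\<in>N w. R c a \<and> (\<exists>y\<in>E c. S y A) \<and> (\<forall>y\<in>E c. S y A \<longrightarrow> S y B)"
      using s(1) by blast
  qed
next
  case (AxU1 L' A)
  have hU: "hasU L" using AxU1 by simp
  show ?case
  proof (simp only: sat.simps(5) sat_CondBot, intro impI)
    assume h: "\<forall>a\<in>N w. \<not> (\<exists>y\<in>E a. S y (Neg A))"
    show "\<forall>a\<in>N w. \<not> (\<exists>y\<in>E a. S y (Neg (Cond (Neg A) Bot)))"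
    proof (intro ballI notI)
      fix a assume a: "a \<in> N w" "\<exists>y\<in>E a. S y (Neg (Cond (Neg A) Bot))"
      then obtain y where y: "y \<in> E a" "\<not> S y (Cond (Neg A) Bot)" by (auto simp only: sat_Neg)
      then obtain b z where bz: "b \<in> N y" "z \<in> E b" "S z (Neg A)" unfolding sat_CondBot by blast
      obtain c where "c \<in> N w" "z \<in> E c" using fU1[OF hU a(1) y(1) bz(1) bz(2)] by blast
      thus False using h bz(3) by blast
    qed
  qed
next
  case (AxU2 L' A)
  have hU: "hasU L" using AxU2 by simp
  show ?case
  proof (simp only: sat.simps(5) sat_CondBot sat_Neg, intro impI)
    assume h: "\<not> (\<forall>a\<in>N w. \<not> (\<exists>y\<in>E a. S y A))"
    then obtain b z where bz: "b \<in> N w" "z \<in> E b" "S z A" by blast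
    show "\<forall>a\<in>N w. \<not> (\<exists>y\<in>E a. \<forall>a\<in>N y. \<not> (\<exists>y\<in>E a. S y A))"
    proof (intro ballI notI)
      fix a assume a: "a \<in> N w" "\<exists>y\<in>E a. \<forall>a\<in>N y. \<not> (\<exists>y\<in>E a. S y A)"
      then obtain y where y: "y \<in> E a" "\<forall>a\<in>N y. \<not> (\<exists>y\<in>E a. S y A)" by blast
      obtain c where "c \<in> N y" "z \<in> E c" using fU2[OF hU a(1) y(1) bz(1) bz(2)] by blast
      thus False using y(2) bz(3) by blast
    qed
  qed
next
  case (AxA1 L' A B C)
  have hA: "hasA L" using AxA1 by simp
  show ?case
  proof (simp only: sat.simps(5), intro impI)
    assume h: "S w (Cond A B)"
    show "S w (Cond C (Cond A B))"
    proof (rule cond_triv)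
      fix a y assume "a \<in> N w" "y \<in> E a"
      hence "N y = N w" by (rule fA[OF hA])
      thus "S y (Cond A B)" using h sat_congN by blast
    qed
  qed
next
  case (AxA2 L' A B C)
  have hA: "hasA L" using AxA2 by simp
  show ?case
  proof (simp only: sat.simps(5), intro impI)
    assume h: "S w (Neg (Cond A B))"
    show "S w (Cond C (Neg (Cond A B)))"
    proof (rule cond_triv)
      fix a y assume "a \<in> N w" "y \<in> E a"
      hence "N y = N w" by (rule fA[OF hA])
      hence "S y (Cond A B) = S w (Cond A B)" by (rule sat_congN)
      thus "S y (Neg (Cond A B))" using h by (simp only: sat_Neg simp_thms)
    qed
  qed
qed


lemma sound: "hderiv L A \<Longrightarrow> S w A"
  using sound0 by blast

end



context canon
begin

definition cV :: "nat \<Rightarrow> nat \<Rightarrow> bool" where "cV x p \<longleftrightarrow> Lab x (Atom p) \<in> GI"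
definition cN :: "nat \<Rightarrow> nlabel set" where "cN x = {a. InN a x \<in> GI}"
definition cE :: "nlabel \<Rightarrow> nat set" where "cE a = {y. Mem y a \<in> GI}"
definition cR :: "nlabel \<Rightarrow> nlabel \<Rightarrow> bool" where "cR c a \<longleftrightarrow> Sub c a \<in> GI"

lemma canon_model: "model L cV cN cE cR"
proof
  fix a show "cR a a" unfolding cR_def by (rule satRef)
next
  fix c b a assume "cR c b" "cR b a" thus "cR c a" unfolding cR_def by (rule satTr)
next
  fix c a y assume "cR c a" "y \<in> cE c" thus "y \<in> cE a" unfolding cR_def cE_def using satLSub by blast
next
  fix x assume h: "hasN L"
  obtain n where n: "InN (NV n) x \<in> GI" using satN[OF h] by blast
  obtain y where "Mem y (NV n) \<in> GI" using sat0[OF h n] by blast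
  thus "\<exists>a\<in>cN x. \<exists>y. y \<in> cE a" using n unfolding cN_def cE_def by blast
next
  fix x assume h: "hasT L"
  obtain n where "Mem x (NV n) \<in> GI \<and> InN (NV n) x \<in> GI" using satT[OF h] by blast
  thus "\<exists>a\<in>cN x. x \<in> cE a" unfolding cN_def cE_def by blast
next
  fix a x assume "hasW L" "a \<in> cN x" thus "x \<in> cE a" unfolding cN_def cE_def using satW by blast
next
  fix x assume h: "hasC L"
  have hN: "hasN L" using h has_imp by blast
  obtain n where n: "InN (NV n) x \<in> GI" using satN[OF hN] by blast
  have s1: "InN (Sg x) x \<in> GI" using satC[OF h n] by blast
  have s2: "\<forall>a\<in>cN x. cR (Sg x) a" unfolding cN_def cR_def using satC[OF h] by blast
  have s3: "x \<in> cE (Sg x)" unfolding cE_def using satSingle[OF h s1] by blast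
  have s4: "\<forall>y\<in>cE (Sg x). cV y = cV x \<and> cN y = cN x"
  proof
    fix y assume "y \<in> cE (Sg x)"
    hence m: "Mem y (Sg x) \<in> GI" unfolding cE_def by simp
    have "cV y p = cV x p" for p
      using satRepl1[OF h m, of "AkLab p"] satRepl2[OF h m, of "AkLab p"] unfolding cV_def by auto
    moreover have "a \<in> cN y \<longleftrightarrow> a \<in> cN x" for a
      using satRepl1[OF h m, of "AkInN a"] satRepl2[OF h m, of "AkInN a"] unfolding cN_def by auto
    ultimately show "cV y = cV x \<and> cN y = cN x" by blast
  qed
  show "\<exists>s\<in>cN x. (\<forall>a\<in>cN x. cR s a) \<and> x \<in> cE s \<and> (\<forall>y\<in>cE s. cV y = cV x \<and> cN y = cN x)"
    using s1 s2 s3 s4 unfolding cN_def by blast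
next
  fix a x y b z assume "hasU L" "a \<in> cN x" "y \<in> cE a" "b \<in> cN y" "z \<in> cE b"
  thus "\<exists>c\<in>cN x. z \<in> cE c" unfolding cN_def cE_def using satU1 by blast
next
  fix a x y b z assume "hasU L" "a \<in> cN x" "y \<in> cE a" "b \<in> cN x" "z \<in> cE b"
  thus "\<exists>c\<in>cN y. z \<in> cE c" unfolding cN_def cE_def using satU2 by blast
next
  fix a x y assume h: "hasA L" "a \<in> cN x" "y \<in> cE a"
  have "b \<in> cN y \<longleftrightarrow> b \<in> cN x" for b
    using h satA1[OF h(1), of a x y b] satA2[OF h(1), of a x y b] unfolding cN_def cE_def by auto
  thus "cN y = cN x" by blast
qed

abbreviation T where "T \<equiv> sat cV cN cE cR"

lemma truth: "(Lab x A \<in> GI \<longrightarrow> T x A) \<and> (Lab x A \<in> DI \<longrightarrow> \<not> T x A)"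
proof (induction A arbitrary: x)
  case (Atom p)
  show ?case
  proof (intro conjI impI)
    assume "Lab x (Atom p) \<in> GI" thus "T x (Atom p)" unfolding cV_def by simp
  next
    assume "Lab x (Atom p) \<in> DI" thus "\<not> T x (Atom p)" using noAtom unfolding cV_def by (simp only: sat.simps(1)) blast
  qed
next
  case Bot
  show ?case
  proof (intro conjI impI)
    assume "Lab x Bot \<in> GI" thus "T x Bot" using noBot by blast
  next
    show "\<not> T x Bot" by simp
  qed
next
  case (And A B)
  show ?case
  proof (intro conjI impI)
    assume "Lab x (And A B) \<in> GI"
    hence "Lab x A \<in> GI" "Lab x B \<in> GI" using satLAnd by blast+
    hence "T x A" "T x B" using And.IH by blast+
    thus "T x (And A B)" by simp
  next
    assume "Lab x (And A B) \<in> DI"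
    hence "Lab x A \<in> DI \<or> Lab x B \<in> DI" using satRAnd by blast
    hence "\<not> T x A \<or> \<not> T x B" using And.IH by blast
    thus "\<not> T x (And A B)" by simp
  qed
next
  case (Or A B)
  show ?case
  proof (intro conjI impI)
    assume "Lab x (Or A B) \<in> GI"
    hence "Lab x A \<in> GI \<or> Lab x B \<in> GI" using satLOr by blast
    hence "T x A \<or> T x B" using Or.IH by blast
    thus "T x (Or A B)" by simp
  next
    assume "Lab x (Or A B) \<in> DI"
    hence "Lab x A \<in> DI" "Lab x B \<in> DI" using satROr by blast+
    hence "\<not> T x A" "\<not> T x B" using Or.IH by blast+
    thus "\<not> T x (Or A B)" by simp
  qed
next
  case (Imp A B)
  show ?case
  proof (intro conjI impI)
    assume "Lab x (Imp A B) \<in> GI"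
    hence "Lab x A \<in> DI \<or> Lab x B \<in> GI" using satLImp by blast
    hence "\<not> T x A \<or> T x B" using Imp.IH by blast
    thus "T x (Imp A B)" by simp
  next
    assume "Lab x (Imp A B) \<in> DI"
    hence "Lab x A \<in> GI" "Lab x B \<in> DI" using satRImp by blast+
    hence "T x A" "\<not> T x B" using Imp.IH by blast+
    thus "\<not> T x (Imp A B)" by simp
  qed
next
  case (Cond A B)
  have imp: "T y A \<longrightarrow> T y B" if "Lab y (Imp A B) \<in> GI" for y
    using satLImp[OF that] Cond.IH by blast
  show ?case
  proof (intro conjI impI)
    assume h: "Lab x (Cond A B) \<in> GI"
    show "T x (Cond A B)"
    proof (simp only: sat.simps(6), intro ballI impI)
      fix a assume a: "a \<in> cN x" "\<exists>y\<in>cE a. T y A"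
      then obtain y where y: "Mem y a \<in> GI" "T y A" unfolding cE_def by blast
      have ina: "InN a x \<in> GI" using a(1) unfolding cN_def by simp
      show "\<exists>c\<in>cN x. cR c a \<and> (\<exists>y\<in>cE c. T y A) \<and> (\<forall>y\<in>cE c. T y A \<longrightarrow> T y B)"
      proof (cases "FEx a A \<in> DI")
        case True
        hence "Lab y A \<in> DI" using satREx y(1) by blast
        thus ?thesis using Cond.IH y(2) by blast
      next
        case False
        hence "CondL x a A B \<in> GI" using satLCond[OF ina h] by blast
        then obtain n where n: "InN (NV n) x \<in> GI" "Sub (NV n) a \<in> GI" "FEx (NV n) A \<in> GI"
          "FAll (NV n) (Imp A B) \<in> GI" using satLBar by blast
        obtain y' where y': "Mem y' (NV n) \<in> GI" "Lab y' A \<in> GI" using satLEx[OF n(3)] by blast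
        have "\<forall>y\<in>cE (NV n). T y A \<longrightarrow> T y B"
        proof
          fix y assume "y \<in> cE (NV n)"
          hence "Lab y (Imp A B) \<in> GI" using satLAll n(4) unfolding cE_def by blast
          thus "T y A \<longrightarrow> T y B" by (rule imp)
        qed
        moreover have "\<exists>y\<in>cE (NV n). T y A" using y' Cond.IH unfolding cE_def by blast
        ultimately show ?thesis using n(1,2) unfolding cN_def cR_def by blast
      qed
    qed
  next
    assume h: "Lab x (Cond A B) \<in> DI"
    obtain n where n: "InN (NV n) x \<in> GI" "FEx (NV n) A \<in> GI" "CondL x (NV n) A B \<in> DI"
      using satRCond[OF h] by blast
    obtain y' where y': "Mem y' (NV n) \<in> GI" "Lab y' A \<in> GI" using satLEx[OF n(2)] by blast
    show "\<not> T x (Cond A B)"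
    proof
      assume "T x (Cond A B)"
      hence t: "\<forall>a\<in>cN x. (\<exists>y\<in>cE a. T y A) \<longrightarrow>
        (\<exists>c\<in>cN x. cR c a \<and> (\<exists>y\<in>cE c. T y A) \<and> (\<forall>y\<in>cE c. T y A \<longrightarrow> T y B))"
        by (simp only: sat.simps(6))
      have "NV n \<in> cN x" using n(1) unfolding cN_def by simp
      moreover have "\<exists>y\<in>cE (NV n). T y A" using y' Cond.IH unfolding cE_def by blast
      ultimately obtain c where c: "c \<in> cN x" "cR c (NV n)" "\<exists>y\<in>cE c. T y A" "\<forall>y\<in>cE c. T y A \<longrightarrow> T y B"
        using t by blast
      have "FEx c A \<in> DI \<or> FAll c (Imp A B) \<in> DI"
        using satRBar[of c x "NV n" A B] c(1,2) n(3) unfolding cN_def cR_def by blast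
      thus False
      proof
        assume "FEx c A \<in> DI"
        obtain y where "y \<in> cE c" "T y A" using c(3) by blast
        hence "Lab y A \<in> DI" using satREx \<open>FEx c A \<in> DI\<close> unfolding cE_def by blast
        thus False using Cond.IH \<open>T y A\<close> by blast
      next
        assume "FAll c (Imp A B) \<in> DI"
        then obtain y where y: "Mem y c \<in> GI" "Lab y (Imp A B) \<in> DI" using satRAll by blast
        hence "Lab y A \<in> GI" "Lab y B \<in> DI" using satRImp by blast+
        hence "T y A" "\<not> T y B" using Cond.IH by blast+
        moreover have "y \<in> cE c" using y(1) unfolding cE_def by simp
        ultimately show False using c(4) by blast
      qed
    qed
  qed
qed

end

theorem mainTheorem13:
  fixes L :: logic and A :: form and x :: wlabel
  assumes "hderiv L A"
  shows "deriv L {#} {#Lab x A#}"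
proof (rule ccontr)
  assume nd: "\<not> deriv L {#} {#Lab x A#}"
  interpret canon L "({#}, {#Lab x A#})" using nd by unfold_locales simp
  interpret model L cV cN cE cR by (rule canon_model)
  have "Lab x A \<in> DI" using inDI[of _ 0] by simp
  hence "\<not> sat cV cN cE cR x A" using truth by blast
  moreover have "sat cV cN cE cR x A" using sound[OF assms] .
  ultimately show False by contradiction
qed



end
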